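(* Let $n\ge1$ and let $\kappa(n):=\|e_1\vee\cdots\vee e_n\|_{\pi s+,\ell_1}$. Then $\kappa(n)=\|e_1\vee\cdots\vee e_n\|_{\pi s+,\ell_1^n}$, and for every $m$ with $n\le m\le\infty$ we have $c_{\pi,s+}(n,\ell_1^m)=\kappa(n)$. Furthermore, $$\sup_E\frac{c_{\pi,s+}(n,E)}{c_+(E)^n}=\sup_{E:\,c_+(E)=1}c_{\pi,s+}(n,E)=c_{\pi,s+}(n,\ell_1)=c_{\pi,s+}(n,\ell_1^n)=\kappa(n),$$ where the suprema are over all ordered normed spaces $E$.
   Context: All vector spaces are real. An ordered normed space is a real normed space $E$ together with a closed convex cone $E_+\subseteq E$ (positive elements) such that $E=E_+-E_+$ and such that, writing $\|x\|_+:=\inf\{\|y\|+\|z\|: x=y-z,\ y,z\in E_+\}$, the constant $c_+(E):=\sup\{\|x\|_+:\|x\|\le1\}$ is finite. $E^{\otimes n}$ is the algebraic $n$-th tensor power, $E^{\vee n}$ the subspace of symmetric tensors, $x^{\otimes n}:=x\otimes\cdots\otimes x$, and $x_1\vee\cdots\vee x_n:=\frac1{n!}\sum_{\sigma\in\mathfrak S_n}x_{\sigma(1)}\otimes\cdots\otimes x_{\sigma(n)}$. Norms: $\|\mathbf{x}\|_{\pi,E}:=\inf\{\sum_k|a_k|\,\|x_{1k}\|\cdots\|x_{nk}\| : \mathbf{x}=\sum_k a_k x_{1k}\otimes\cdots\otimes x_{nk}\}$ and $\|\mathbf{x}\|_{\pi s+,E}:=\inf\{\sum_k|a_k|\,\|x_k\|^n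 : \mathbf{x}=\sum_k a_k x_k^{\otimes n},\ x_k\in E_+\}$ (finite sums, $a_k\in\mathbb{R}$). The positive polarization constant is $c_{\pi,s+}(n,E):=\sup\{\|\mathbf{x}\|_{\pi s+,E}/\|\mathbf{x}\|_{\pi,E}:0\ne\mathbf{x}\in E^{\vee n}\}$. For $1\le m<\infty$, $\ell_1^m$ is $\mathbb{R}^m$ with the $\ell_1$-norm, $\ell_1^\infty=\ell_1$, both ordered coordinatewise (positive cone = vectors with nonnegative coordinates); $(e_i)$ is the standard basis. *)

theory Defs
  imports "HOL-Analysis.Analysis" "HOL-Library.Function_Algebras"
begin

instantiation "fun" :: (type, real_vector) real_vector
begin
definition scaleR_fun :: "real \<Rightarrow> ('a \<Rightarrow> 'b) \<Rightarrow> 'a \<Rightarrow> 'b"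
  where "scaleR_fun c f = (\<lambda>x. c *\<^sub>R f x)"
instance
  by standard (auto simp: scaleR_fun_def fun_eq_iff scaleR_add_right scaleR_add_left)
end

definition is_norm_on :: "'a::real_vector set \<Rightarrow> ('a \<Rightarrow> real) \<Rightarrow> bool" where
  "is_norm_on V N \<longleftrightarrow> subspace V \<and>
     (\<forall>x\<in>V. 0 \<le> N x \<and> (N x = 0 \<longleftrightarrow> x = 0)) \<and>
     (\<forall>x\<in>V. \<forall>y\<in>V. N (x + y) \<le> N x + N y) \<and>
     (\<forall>x\<in>V. \<forall>c. N (c *\<^sub>R x) = \<bar>c\<bar> * N x)"

definition pos_norm :: "'a::real_vector set \<Rightarrow> ('a \<Rightarrow> real) \<Rightarrow> 'a set \<Rightarrow> 'a \<Rightarrow> real" where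
  "pos_norm V N C x = Inf {N y + N z | y z. y \<in> C \<and> z \<in> C \<and> x = y - z}"

definition c_plus :: "'a::real_vector set \<Rightarrow> ('a \<Rightarrow> real) \<Rightarrow> 'a set \<Rightarrow> real" where
  "c_plus V N C = Sup {pos_norm V N C x | x. x \<in> V \<and> N x \<le> 1}"

definition ordered_normed_space :: "'a::real_vector set \<Rightarrow> ('a \<Rightarrow> real) \<Rightarrow> 'a set \<Rightarrow> bool" where
  "ordered_normed_space V N C \<longleftrightarrow>
     is_norm_on V N \<and> C \<subseteq> V \<and>
     (\<forall>x\<in>C. \<forall>y\<in>C. x + y \<in> C) \<and> (\<forall>x\<in>C. \<forall>c\<ge>0. c *\<^sub>R x \<in> C) \<and> C \<noteq> {} \<and>
     (\<forall>X x. (\<forall>k. X k \<in> C) \<and> x \<in> V \<and> (\<lambda>k. N (X k - x)) \<longlonglongrightarrow> 0 \<longrightarrow> x \<in> C) \<and>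
     (\<forall>x\<in>V. \<exists>y\<in>C. \<exists>z\<in>C. x = y - z) \<and>
     bdd_above {pos_norm V N C x | x. x \<in> V \<and> N x \<le> 1}"

text \<open>The algebraic tensor power V^{\<otimes>n} is realised faithfully (injectively) inside the
algebraic dual of the space of n-linear forms on V: a tensor is the functional it induces
on n-linear forms. An n-tuple of vectors is a function nat \<Rightarrow> 'a, of which only the
entries with index < n matter.\<close>

definition multilinear_form :: "'a::real_vector set \<Rightarrow> nat \<Rightarrow> ((nat \<Rightarrow> 'a) \<Rightarrow> real) \<Rightarrow> bool" where
  "multilinear_form V n \<phi> \<longleftrightarrow>
     (\<forall>ys. \<phi> ys = \<phi> (\<lambda>i. if i < n then ys i else 0)) \<and>
     (\<forall>i<n. \<forall>ys. (\<forall>j<n. ys j \<in> V) \<longrightarrow>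
        (\<forall>u\<in>V. \<forall>v\<in>V. \<phi> (ys(i := u + v)) = \<phi> (ys(i := u)) + \<phi> (ys(i := v))) \<and>
        (\<forall>u\<in>V. \<forall>c. \<phi> (ys(i := c *\<^sub>R u)) = c * \<phi> (ys(i := u))))"

type_synonym 'a tensor = "((nat \<Rightarrow> 'a) \<Rightarrow> real) \<Rightarrow> real"

definition etensor :: "'a::real_vector set \<Rightarrow> nat \<Rightarrow> (nat \<Rightarrow> 'a) \<Rightarrow> 'a tensor" where
  "etensor V n xs = (\<lambda>\<phi>. if multilinear_form V n \<phi> then \<phi> xs else 0)"

definition tpow :: "'a::real_vector set \<Rightarrow> nat \<Rightarrow> 'a \<Rightarrow> 'a tensor" where
  "tpow V n x = etensor V n (\<lambda>_. x)"

definition tensor_space :: "'a::real_vector set \<Rightarrow> nat \<Rightarrow> 'a tensor set" where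
  "tensor_space V n = {t. \<exists>(K::nat) a xs. (\<forall>k<K. \<forall>i<n. xs k i \<in> V) \<and>
                        t = (\<lambda>\<phi>. \<Sum>k<K. a k * etensor V n (xs k) \<phi>)}"

definition sym_tensors :: "'a::real_vector set \<Rightarrow> nat \<Rightarrow> 'a tensor set" where
  "sym_tensors V n = {t \<in> tensor_space V n. \<forall>\<sigma>. \<sigma> permutes {..<n} \<longrightarrow>
                          t = (\<lambda>\<phi>. t (\<lambda>ys. \<phi> (ys \<circ> \<sigma>)))}"

definition vee :: "'a::real_vector set \<Rightarrow> nat \<Rightarrow> (nat \<Rightarrow> 'a) \<Rightarrow> 'a tensor" where
  "vee V n xs = (\<lambda>\<phi>. (1 / fact n) * (\<Sum>\<sigma>\<in>{\<sigma>. \<sigma> permutes {..<n}}. etensor V n (xs \<circ> \<sigma>) \<phi>))"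

definition pi_norm :: "'a::real_vector set \<Rightarrow> ('a \<Rightarrow> real) \<Rightarrow> nat \<Rightarrow> 'a tensor \<Rightarrow> ereal" where
  "pi_norm V N n t = Inf {ereal (\<Sum>k<K. \<bar>a k\<bar> * (\<Prod>i<n. N (xs k i))) | (K::nat) a xs.
       (\<forall>k<K. \<forall>i<n. xs k i \<in> V) \<and> t = (\<lambda>\<phi>. \<Sum>k<K. a k * etensor V n (xs k) \<phi>)}"

definition pis_plus_norm :: "'a::real_vector set \<Rightarrow> ('a \<Rightarrow> real) \<Rightarrow> 'a set \<Rightarrow> nat \<Rightarrow> 'a tensor \<Rightarrow> ereal" where
  "pis_plus_norm V N C n t = Inf {ereal (\<Sum>k<K. \<bar>a k\<bar> * N (x k) ^ n) | (K::nat) a x.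
       (\<forall>k<K. x k \<in> C) \<and> t = (\<lambda>\<phi>. \<Sum>k<K. a k * tpow V n (x k) \<phi>)}"

definition c_pi_splus :: "nat \<Rightarrow> 'a::real_vector set \<Rightarrow> ('a \<Rightarrow> real) \<Rightarrow> 'a set \<Rightarrow> ereal" where
  "c_pi_splus n V N C = Sup {pis_plus_norm V N C n t / pi_norm V N n t | t.
       t \<in> sym_tensors V n \<and> t \<noteq> (\<lambda>\<phi>. 0)}"

section \<open>The spaces l_1^m and l_1, ordered coordinatewise (indices start at 0)\<close>

definition l1fin_V :: "nat \<Rightarrow> (nat \<Rightarrow> real) set" where
  "l1fin_V m = {x. \<forall>i\<ge>m. x i = 0}"
definition l1fin_N :: "nat \<Rightarrow> (nat \<Rightarrow> real) \<Rightarrow> real" where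
  "l1fin_N m x = (\<Sum>i<m. \<bar>x i\<bar>)"
definition l1fin_C :: "nat \<Rightarrow> (nat \<Rightarrow> real) set" where
  "l1fin_C m = {x \<in> l1fin_V m. \<forall>i. 0 \<le> x i}"

definition l1_V :: "(nat \<Rightarrow> real) set" where
  "l1_V = {x. summable (\<lambda>i. \<bar>x i\<bar>)}"
definition l1_N :: "(nat \<Rightarrow> real) \<Rightarrow> real" where
  "l1_N x = (\<Sum>i. \<bar>x i\<bar>)"
definition l1_C :: "(nat \<Rightarrow> real) set" where
  "l1_C = {x \<in> l1_V. \<forall>i. 0 \<le> x i}"

text \<open>standard basis vector e_{i+1} (0-indexed)\<close>
definition ebasis :: "nat \<Rightarrow> nat \<Rightarrow> real" where
  "ebasis i = (\<lambda>j. if j = i then 1 else 0)"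

definition kappa :: "nat \<Rightarrow> ereal" where
  "kappa n = pis_plus_norm l1_V l1_N l1_C n (vee l1_V n ebasis)"

end

theory Submission
  imports Defs
begin

lemma ml_trunc:
  assumes "multilinear_form V n \<phi>" "\<forall>i<n. xs i = ys i"
  shows "\<phi> xs = \<phi> ys"
proof -
  have "(\<lambda>i. if i<n then xs i else 0) = (\<lambda>i. if i<n then ys i else 0)" using assms(2) by auto
  then show ?thesis using assms(1) unfolding multilinear_form_def by metis
qed

lemma ml_add:
  assumes "multilinear_form V n \<phi>" "i < n" "\<forall>j<n. ys j \<in> V" "u \<in> V" "v \<in> V"
  shows "\<phi> (ys(i := u + v)) = \<phi> (ys(i := u)) + \<phi> (ys(i := v))"
  using assms unfolding multilinear_form_def by blast

lemma ml_scale: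
  assumes "multilinear_form V n \<phi>" "i < n" "\<forall>j<n. ys j \<in> V" "u \<in> V"
  shows "\<phi> (ys(i := c *\<^sub>R u)) = c * \<phi> (ys(i := u))"
  using assms unfolding multilinear_form_def by blast

lemma ml_perm:
  assumes ml: "multilinear_form V n \<phi>" and p: "\<sigma> permutes {..<n}"
  shows "multilinear_form V n (\<lambda>ys. \<phi> (ys \<circ> \<sigma>))"
proof -
  have A: "\<forall>ys. \<phi> (ys \<circ> \<sigma>) = \<phi> ((\<lambda>i. if i < n then ys i else 0) \<circ> \<sigma>)"
  proof
    fix ys :: "nat \<Rightarrow> 'a"
    show "\<phi> (ys \<circ> \<sigma>) = \<phi> ((\<lambda>i. if i < n then ys i else 0) \<circ> \<sigma>)"
      apply (rule ml_trunc[OF ml]) using permutes_in_image[OF p] by auto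
  qed
  have B: "\<phi> ((ys(i := w)) \<circ> \<sigma>) = \<phi> (((ys \<circ> \<sigma>)(inv \<sigma> i := w)))" for ys i w
  proof -
    have "(ys(i := w)) \<circ> \<sigma> = (ys \<circ> \<sigma>)(inv \<sigma> i := w)"
    proof
      fix l show "((ys(i := w)) \<circ> \<sigma>) l = ((ys \<circ> \<sigma>)(inv \<sigma> i := w)) l"
        using permutes_inverses[OF p] by (auto simp: fun_upd_def)
    qed
    then show ?thesis by simp
  qed
  have C: "\<forall>i<n. \<forall>ys. (\<forall>j<n. ys j \<in> V) \<longrightarrow>
        (\<forall>u\<in>V. \<forall>v\<in>V. \<phi> ((ys(i := u + v)) \<circ> \<sigma>) = \<phi> ((ys(i := u)) \<circ> \<sigma>) + \<phi> ((ys(i := v)) \<circ> \<sigma>)) \<and>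
        (\<forall>u\<in>V. \<forall>c. \<phi> ((ys(i := c *\<^sub>R u)) \<circ> \<sigma>) = c * \<phi> ((ys(i := u)) \<circ> \<sigma>))"
  proof (intro allI impI conjI ballI)
    fix i ys assume i: "i < n" and ys: "\<forall>j<n. ys j \<in> V"
    have j: "inv \<sigma> i < n" using permutes_in_image[OF permutes_inv[OF p]] i by auto
    have ys': "\<forall>l<n. (ys \<circ> \<sigma>) l \<in> V" using ys permutes_in_image[OF p] by auto
    fix u assume u: "u \<in> V"
    { fix v assume v: "v \<in> V"
      show "\<phi> ((ys(i := u + v)) \<circ> \<sigma>) = \<phi> ((ys(i := u)) \<circ> \<sigma>) + \<phi> ((ys(i := v)) \<circ> \<sigma>)"
        unfolding B using ml_add[OF ml j ys' u v] . }
    { fix c show "\<phi> ((ys(i := c *\<^sub>R u)) \<circ> \<sigma>) = c * \<phi> ((ys(i := u)) \<circ> \<sigma>)"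
        unfolding B using ml_scale[OF ml j ys' u] . }
  qed
  show ?thesis unfolding multilinear_form_def using A C by blast
qed

lemma etensor_cong:
  assumes "\<forall>i<n. xs i = ys i"
  shows "etensor V n xs = etensor V n ys"
  using ml_trunc[OF _ assms] unfolding etensor_def by (auto simp: fun_eq_iff)

lemma ml_zero_slot:
  assumes ml: "multilinear_form V n \<phi>" and V: "subspace V" and i: "i < n"
    and ys: "\<forall>j<n. ys j \<in> V" and z: "ys i = 0"
  shows "\<phi> ys = 0"
proof -
  have "ys = ys(i := (0::real) *\<^sub>R 0)" using z by auto
  then have "\<phi> ys = 0 * \<phi> (ys(i := 0))"
    using ml_scale[OF ml i ys, of 0 0] V subspace_0 by metis
  then show ?thesis by simp
qed


lemma ml_expand_aux:
  fixes cc dd :: "nat \<Rightarrow> real" and p q x r :: "nat \<Rightarrow> 'a::real_vector"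
  assumes ml: "multilinear_form V n \<phi>" and V: "subspace V"
    and x: "\<forall>i<n. x i = cc i *\<^sub>R p i + dd i *\<^sub>R q i"
    and p: "\<forall>i<n. p i \<in> V" and q: "\<forall>i<n. q i \<in> V"
  shows "m \<le> n \<Longrightarrow> \<forall>j<n. r j \<in> V \<Longrightarrow> \<phi> (\<lambda>i. if i<m then x i else r i) =
     (\<Sum>S\<in>Pow {..<m}. (\<Prod>i<m. if i\<in>S then dd i else cc i) *
          \<phi> (\<lambda>i. if i<m then (if i\<in>S then q i else p i) else r i))"
proof (induction m arbitrary: r)
  case 0 then show ?case by simp
next
  case (Suc m)
  have m: "m < n" using Suc by simp
  define r' where "r' = r(m := x m)"
  have xm: "x m \<in> V" using x p q m V by (simp add: subspace_add subspace_scale)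
  have r': "\<forall>j<n. r' j \<in> V" using Suc.prems xm by (simp add: r'_def)
  define Z where "Z = (\<lambda>S i. if i<m then (if i\<in>S then q i else p i) else r i)"
  have Z: "\<forall>j<n. Z S j \<in> V" for S using p q Suc.prems by (simp add: Z_def)
  have "\<phi> (\<lambda>i. if i < Suc m then x i else r i) = \<phi> (\<lambda>i. if i<m then x i else r' i)"
    by (rule arg_cong[where f=\<phi>]) (auto simp: r'_def fun_eq_iff)
  also have "\<dots> = (\<Sum>S\<in>Pow {..<m}. (\<Prod>i<m. if i\<in>S then dd i else cc i) *
          \<phi> (\<lambda>i. if i<m then (if i\<in>S then q i else p i) else r' i))"
    using Suc.IH[OF _ r'] m by simp
  also have "\<dots> = (\<Sum>S\<in>Pow {..<m}. (\<Prod>i<m. if i\<in>S then dd i else cc i) *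
          (cc m * \<phi> ((Z S)(m := p m)) + dd m * \<phi> ((Z S)(m := q m))))"
  proof (rule sum.cong[OF refl])
    fix S
    have e: "(\<lambda>i. if i<m then (if i\<in>S then q i else p i) else r' i) = (Z S)(m := cc m *\<^sub>R p m + dd m *\<^sub>R q m)"
      using x m by (auto simp: Z_def r'_def fun_eq_iff)
    have "\<phi> ((Z S)(m := cc m *\<^sub>R p m + dd m *\<^sub>R q m)) = \<phi> ((Z S)(m := cc m *\<^sub>R p m)) + \<phi> ((Z S)(m := dd m *\<^sub>R q m))"
      by (rule ml_add[OF ml m Z]) (use p q m V in \<open>auto simp: subspace_scale\<close>)
    also have "\<dots> = cc m * \<phi> ((Z S)(m := p m)) + dd m * \<phi> ((Z S)(m := q m))"
      using ml_scale[OF ml m Z] p q m by simp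
    finally show "(\<Prod>i<m. if i\<in>S then dd i else cc i) * \<phi> (\<lambda>i. if i<m then (if i\<in>S then q i else p i) else r' i) =
       (\<Prod>i<m. if i\<in>S then dd i else cc i) * (cc m * \<phi> ((Z S)(m := p m)) + dd m * \<phi> ((Z S)(m := q m)))"
      unfolding e by simp
  qed
  also have "\<dots> = (\<Sum>S\<in>Pow {..<m}. (\<Prod>i<Suc m. if i\<in>S then dd i else cc i) *
          \<phi> (\<lambda>i. if i<Suc m then (if i\<in>S then q i else p i) else r i)) +
       (\<Sum>S\<in>Pow {..<m}. (\<Prod>i<Suc m. if i\<in>insert m S then dd i else cc i) *
          \<phi> (\<lambda>i. if i<Suc m then (if i\<in>insert m S then q i else p i) else r i))"
  proof -
    have a: "(\<Prod>i<Suc m. if i\<in>S then dd i else cc i) = (\<Prod>i<m. if i\<in>S then dd i else cc i) * cc m"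
      if "S \<in> Pow {..<m}" for S using that by auto
    have b: "(\<Prod>i<Suc m. if i\<in>insert m S then dd i else cc i) = (\<Prod>i<m. if i\<in>S then dd i else cc i) * dd m"
      if "S \<in> Pow {..<m}" for S
    proof -
      have "(\<Prod>i<m. if i\<in>insert m S then dd i else cc i) = (\<Prod>i<m. if i\<in>S then dd i else cc i)"
        by (rule prod.cong) auto
      then show ?thesis by simp
    qed
    have c: "(\<lambda>i. if i<Suc m then (if i\<in>S then q i else p i) else r i) = (Z S)(m := p m)"
      if "S \<in> Pow {..<m}" for S using that by (auto simp: Z_def fun_eq_iff)
    have d: "(\<lambda>i. if i<Suc m then (if i\<in>insert m S then q i else p i) else r i) = (Z S)(m := q m)"
      if "S \<in> Pow {..<m}" for S using that by (auto simp: Z_def fun_eq_iff)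
    have s1: "(\<Sum>S\<in>Pow {..<m}. (\<Prod>i<m. if i\<in>S then dd i else cc i) *
          (cc m * \<phi> ((Z S)(m := p m)) + dd m * \<phi> ((Z S)(m := q m)))) =
       (\<Sum>S\<in>Pow {..<m}. (\<Prod>i<m. if i\<in>S then dd i else cc i) * cc m * \<phi> ((Z S)(m := p m))) +
       (\<Sum>S\<in>Pow {..<m}. (\<Prod>i<m. if i\<in>S then dd i else cc i) * dd m * \<phi> ((Z S)(m := q m)))"
      by (simp add: sum.distrib distrib_left mult.assoc)
    have s2: "(\<Sum>S\<in>Pow {..<m}. (\<Prod>i<m. if i\<in>S then dd i else cc i) * cc m * \<phi> ((Z S)(m := p m))) =
       (\<Sum>S\<in>Pow {..<m}. (\<Prod>i<Suc m. if i\<in>S then dd i else cc i) *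
          \<phi> (\<lambda>i. if i<Suc m then (if i\<in>S then q i else p i) else r i))"
      by (rule sum.cong[OF refl]) (simp only: a c)
    have s3: "(\<Sum>S\<in>Pow {..<m}. (\<Prod>i<m. if i\<in>S then dd i else cc i) * dd m * \<phi> ((Z S)(m := q m))) =
       (\<Sum>S\<in>Pow {..<m}. (\<Prod>i<Suc m. if i\<in>insert m S then dd i else cc i) *
          \<phi> (\<lambda>i. if i<Suc m then (if i\<in>insert m S then q i else p i) else r i))"
      by (rule sum.cong[OF refl]) (simp only: b d)
    show ?thesis using s1 s2 s3 by simp
  qed
  also have "\<dots> = (\<Sum>S\<in>Pow {..<Suc m}. (\<Prod>i<Suc m. if i\<in>S then dd i else cc i) *
          \<phi> (\<lambda>i. if i<Suc m then (if i\<in>S then q i else p i) else r i))"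
  proof -
    have pw: "Pow {..<Suc m} = Pow {..<m} \<union> insert m ` Pow {..<m}"
      by (simp add: lessThan_Suc Pow_insert)
    have inj: "inj_on (insert m) (Pow {..<m})"
      by (rule inj_onI) (metis Diff_insert_absorb PowD lessThan_iff less_irrefl subsetD)
    have disj: "Pow {..<m} \<inter> insert m ` Pow {..<m} = {}" by auto
    show ?thesis unfolding pw
      by (subst sum.union_disjoint) (auto simp: sum.reindex[OF inj] disj)
  qed
  finally show ?case .
qed

lemma ml_expand:
  fixes cc dd :: "nat \<Rightarrow> real" and p q x :: "nat \<Rightarrow> 'a::real_vector"
  assumes ml: "multilinear_form V n \<phi>" and V: "subspace V"
    and x: "\<forall>i<n. x i = cc i *\<^sub>R p i + dd i *\<^sub>R q i"
    and p: "\<forall>i<n. p i \<in> V" and q: "\<forall>i<n. q i \<in> V"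
  shows "\<phi> x = (\<Sum>S\<in>Pow {..<n}. (\<Prod>i<n. if i\<in>S then dd i else cc i) *
          \<phi> (\<lambda>i. if i\<in>S then q i else p i))"
proof -
  have "\<phi> x = \<phi> (\<lambda>i. if i<n then x i else 0)" by (rule ml_trunc[OF ml]) auto
  also have "\<dots> = (\<Sum>S\<in>Pow {..<n}. (\<Prod>i<n. if i\<in>S then dd i else cc i) *
          \<phi> (\<lambda>i. if i<n then (if i\<in>S then q i else p i) else 0))"
    by (rule ml_expand_aux[OF ml V x p q]) (auto simp: subspace_0[OF V])
  also have "\<dots> = (\<Sum>S\<in>Pow {..<n}. (\<Prod>i<n. if i\<in>S then dd i else cc i) *
          \<phi> (\<lambda>i. if i\<in>S then q i else p i))"
    apply (rule sum.cong[OF refl])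
    apply (rule arg_cong2[where f="(*)"], rule refl)
    apply (rule ml_trunc[OF ml])
    by auto
  finally show ?thesis .
qed

lemma sum_abs_prod_Pow:
  fixes cc dd :: "nat \<Rightarrow> real"
  shows "(\<Sum>S\<in>Pow {..<n}. \<bar>\<Prod>i<n. if i\<in>S then dd i else cc i\<bar>) = (\<Prod>i<n. \<bar>dd i\<bar> + \<bar>cc i\<bar>)"
proof -
  have "(\<Prod>i<n. \<bar>dd i\<bar> + \<bar>cc i\<bar>) = (\<Sum>S\<in>Pow {..<n}. (\<Prod>i\<in>S. \<bar>dd i\<bar>) * (\<Prod>i\<in>{..<n}-S. \<bar>cc i\<bar>))"
    by (rule prod_add) simp
  also have "\<dots> = (\<Sum>S\<in>Pow {..<n}. \<bar>\<Prod>i<n. if i\<in>S then dd i else cc i\<bar>)"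
  proof (rule sum.cong[OF refl])
    fix S assume S: "S \<in> Pow {..<n}"
    have "(\<Prod>i<n. if i\<in>S then dd i else cc i) = (\<Prod>i\<in>{..<n} \<inter> {i. i\<in>S}. dd i) * (\<Prod>i\<in>{..<n} \<inter> - {i. i\<in>S}. cc i)"
      by (rule prod.If_cases) simp
    moreover have "{..<n} \<inter> {i. i\<in>S} = S" using S by auto
    moreover have "{..<n} \<inter> - {i. i\<in>S} = {..<n} - S" by auto
    ultimately show "(\<Prod>i\<in>S. \<bar>dd i\<bar>) * (\<Prod>i\<in>{..<n}-S. \<bar>cc i\<bar>) = \<bar>\<Prod>i<n. if i\<in>S then dd i else cc i\<bar>"
      by (simp add: abs_mult abs_prod)
  qed
  finally show ?thesis by simp
qed


definition prep :: "'a::real_vector set \<Rightarrow> ('a \<Rightarrow> real) \<Rightarrow> 'a set \<Rightarrow> nat \<Rightarrow> 'a tensor \<Rightarrow> real \<Rightarrow> bool" where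
  "prep V N C n t r \<longleftrightarrow> (\<exists>(K::nat) a x. (\<forall>k<K. x k \<in> C) \<and> t = (\<lambda>\<phi>. \<Sum>k<K. a k * tpow V n (x k) \<phi>)
        \<and> (\<Sum>k<K. \<bar>a k\<bar> * N (x k) ^ n) \<le> r)"

lemma prep_le: "prep V N C n t r \<Longrightarrow> pis_plus_norm V N C n t \<le> ereal r"
  unfolding prep_def pis_plus_norm_def
  by (elim exE conjE, rule Inf_lower2) auto

lemma prep_of_less:
  assumes "pis_plus_norm V N C n t < ereal r" shows "prep V N C n t r"
proof -
  from assms obtain y where y: "y \<in> {ereal (\<Sum>k<K. \<bar>a k\<bar> * N (x k) ^ n) | (K::nat) a x.
       (\<forall>k<K. x k \<in> C) \<and> t = (\<lambda>\<phi>. \<Sum>k<K. a k * tpow V n (x k) \<phi>)}" "y < ereal r"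
    unfolding pis_plus_norm_def by (auto simp: Inf_less_iff)
  then obtain K :: nat and a x where "(\<forall>k<K. x k \<in> C)" "t = (\<lambda>\<phi>. \<Sum>k<K. a k * tpow V n (x k) \<phi>)"
     "ereal (\<Sum>k<K. \<bar>a k\<bar> * N (x k) ^ n) < ereal r" by blast
  then show ?thesis unfolding prep_def by (intro exI[of _ K] exI[of _ a] exI[of _ x]) auto
qed

lemma prep_mono: "prep V N C n t r \<Longrightarrow> r \<le> r' \<Longrightarrow> prep V N C n t r'"
  unfolding prep_def
proof (elim exE conjE)
  fix K :: nat and a x assume "\<forall>k<K. x k \<in> C" "t = (\<lambda>\<phi>. \<Sum>k<K. a k * tpow V n (x k) \<phi>)"
     "(\<Sum>k<K. \<bar>a k\<bar> * N (x k) ^ n) \<le> r" "r \<le> r'"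
  then show "\<exists>(K::nat) a x. (\<forall>k<K. x k \<in> C) \<and> t = (\<lambda>\<phi>. \<Sum>k<K. a k * tpow V n (x k) \<phi>)
        \<and> (\<Sum>k<K. \<bar>a k\<bar> * N (x k) ^ n) \<le> r'"
    apply (intro exI[of _ K] exI[of _ a] exI[of _ x] conjI)
    by (assumption | linarith)+
qed

lemma prep_zero: "prep V N C n (\<lambda>\<phi>. 0) 0"
  unfolding prep_def by (rule exI[of _ 0], rule exI[of _ "\<lambda>_. 0"], rule exI[of _ "\<lambda>_. 0"]) simp

lemma prep_scale:
  assumes "prep V N C n t r" shows "prep V N C n (\<lambda>\<phi>. b * t \<phi>) (\<bar>b\<bar> * r)"
proof -
  from assms obtain K :: nat and a x where h: "\<forall>k<K. x k \<in> C" "t = (\<lambda>\<phi>. \<Sum>k<K. a k * tpow V n (x k) \<phi>)"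
     "(\<Sum>k<K. \<bar>a k\<bar> * N (x k) ^ n) \<le> r" unfolding prep_def by blast
  have "(\<lambda>\<phi>. b * t \<phi>) = (\<lambda>\<phi>. \<Sum>k<K. (b * a k) * tpow V n (x k) \<phi>)"
    using h(2) by (simp add: sum_distrib_left mult.assoc)
  moreover have "(\<Sum>k<K. \<bar>b * a k\<bar> * N (x k) ^ n) = \<bar>b\<bar> * (\<Sum>k<K. \<bar>a k\<bar> * N (x k) ^ n)"
    by (simp add: sum_distrib_left abs_mult mult.assoc)
  moreover have "\<bar>b\<bar> * (\<Sum>k<K. \<bar>a k\<bar> * N (x k) ^ n) \<le> \<bar>b\<bar> * r"
    using h(3) by (simp add: mult_left_mono)
  ultimately show ?thesis unfolding prep_def using h(1) by (intro exI[of _ K] exI[of _ "\<lambda>k. b * a k"] exI[of _ x]) auto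
qed

lemma sum_lessThan_add_nat: "(\<Sum>k<(K1::nat) + K2. g k) = (\<Sum>k<K1. g k) + (\<Sum>k<K2. g (K1 + k))"
  by (induction K2) (auto simp: add.assoc)

lemma prep_add:
  assumes "prep V N C n t1 r1" "prep V N C n t2 r2"
  shows "prep V N C n (\<lambda>\<phi>. t1 \<phi> + t2 \<phi>) (r1 + r2)"
proof -
  from assms(1) obtain K1 :: nat and a1 x1 where h1: "\<forall>k<K1. x1 k \<in> C" "t1 = (\<lambda>\<phi>. \<Sum>k<K1. a1 k * tpow V n (x1 k) \<phi>)"
     "(\<Sum>k<K1. \<bar>a1 k\<bar> * N (x1 k) ^ n) \<le> r1" unfolding prep_def by blast
  from assms(2) obtain K2 :: nat and a2 x2 where h2: "\<forall>k<K2. x2 k \<in> C" "t2 = (\<lambda>\<phi>. \<Sum>k<K2. a2 k * tpow V n (x2 k) \<phi>)"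
     "(\<Sum>k<K2. \<bar>a2 k\<bar> * N (x2 k) ^ n) \<le> r2" unfolding prep_def by blast
  define a where "a = (\<lambda>k. if k < K1 then a1 k else a2 (k - K1))"
  define x where "x = (\<lambda>k. if k < K1 then x1 k else x2 (k - K1))"
  have C: "\<forall>k<K1+K2. x k \<in> C" using h1(1) h2(1) by (auto simp: x_def)
  have s: "(\<Sum>k<K1+K2. g (a k) (x k)) = (\<Sum>k<K1. g (a1 k) (x1 k)) + (\<Sum>k<K2. g (a2 k) (x2 k))" for g :: "real \<Rightarrow> 'a \<Rightarrow> real"
    unfolding sum_lessThan_add_nat by (simp add: a_def x_def)
  have eq: "(\<lambda>\<phi>. t1 \<phi> + t2 \<phi>) = (\<lambda>\<phi>. \<Sum>k<K1+K2. a k * tpow V n (x k) \<phi>)"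
    using s[of "\<lambda>a x. a * tpow V n x _"] h1(2) h2(2) by (auto simp: fun_eq_iff)
  have cost: "(\<Sum>k<K1+K2. \<bar>a k\<bar> * N (x k) ^ n) \<le> r1 + r2"
    using s[of "\<lambda>a x. \<bar>a\<bar> * N x ^ n"] h1(3) h2(3) by simp
  show ?thesis unfolding prep_def
    apply (rule exI[of _ "K1+K2"], rule exI[of _ a], rule exI[of _ x])
    using C eq cost by (intro conjI)
qed

lemma prep_sum:
  assumes "finite S" "\<forall>s\<in>S. prep V N C n (t s) (r s)"
  shows "prep V N C n (\<lambda>\<phi>. \<Sum>s\<in>S. b s * t s \<phi>) (\<Sum>s\<in>S. \<bar>b s\<bar> * r s)"
  using assms
proof (induction S rule: finite_induct)
  case empty then show ?case using prep_zero by simp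
next
  case (insert s S)
  have "prep V N C n (\<lambda>\<phi>. b s * t s \<phi> + (\<Sum>s\<in>S. b s * t s \<phi>)) (\<bar>b s\<bar> * r s + (\<Sum>s\<in>S. \<bar>b s\<bar> * r s))"
  proof (rule prep_add[OF prep_scale[of V N C n "t s" "r s" "b s"] insert.IH])
    show "prep V N C n (t s) (r s)" using insert.prems by simp
    show "\<forall>s\<in>S. prep V N C n (t s) (r s)" using insert.prems by simp
  qed
  then show ?case using insert.hyps by simp
qed


lemma finite_perms: "finite {\<sigma>. \<sigma> permutes {..<(n::nat)}}"
  by (rule finite_permutations) simp

lemma card_perms: "card {\<sigma>. \<sigma> permutes {..<(n::nat)}} = fact n"
  by (rule card_permutations) auto

lemma vee_eval:
  "vee V n xs \<phi> = (if multilinear_form V n \<phi> then (1 / fact n) * (\<Sum>\<sigma>\<in>{\<sigma>. \<sigma> permutes {..<n}}. \<phi> (xs \<circ> \<sigma>)) else 0)"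
  unfolding vee_def etensor_def by simp

lemma vee_as_sum:
  "vee V n xs = (\<lambda>\<phi>. \<Sum>\<sigma>\<in>{\<sigma>. \<sigma> permutes {..<n}}. (1 / fact n) * etensor V n (xs \<circ> \<sigma>) \<phi>)"
  unfolding vee_def by (simp add: sum_distrib_left)

lemma sym_decomp:
  assumes t: "t \<in> sym_tensors V n" and rep: "t = (\<lambda>\<phi>. \<Sum>k<K. a k * etensor V n (xs k) \<phi>)"
  shows "t = (\<lambda>\<phi>. \<Sum>k<K. a k * vee V n (xs k) \<phi>)"
proof
  fix \<phi>
  show "t \<phi> = (\<Sum>k<K. a k * vee V n (xs k) \<phi>)"
  proof (cases "multilinear_form V n \<phi>")
    case True
    have sym: "t \<phi> = t (\<lambda>ys. \<phi> (ys \<circ> \<sigma>))" if "\<sigma> permutes {..<n}" for \<sigma>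
      using t that unfolding sym_tensors_def by (metis (mono_tags, lifting) mem_Collect_eq)
    have ev: "t (\<lambda>ys. \<phi> (ys \<circ> \<sigma>)) = (\<Sum>k<K. a k * \<phi> (xs k \<circ> \<sigma>))" if "\<sigma> permutes {..<n}" for \<sigma>
      using ml_perm[OF True that] unfolding rep etensor_def by simp
    have "t \<phi> = (1 / fact n) * (\<Sum>\<sigma>\<in>{\<sigma>. \<sigma> permutes {..<n}}. t \<phi>)"
      by (simp add: card_perms)
    also have "\<dots> = (1 / fact n) * (\<Sum>\<sigma>\<in>{\<sigma>. \<sigma> permutes {..<n}}. \<Sum>k<K. a k * \<phi> (xs k \<circ> \<sigma>))"
      using sym ev by simp
    also have "\<dots> = (\<Sum>k<K. a k * vee V n (xs k) \<phi>)"
      unfolding vee_eval using True by (simp add: sum.swap[of _ "{..<K}"] sum_distrib_left sum_distrib_right mult_ac)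
    finally show ?thesis .
  next
    case False
    then show ?thesis unfolding rep vee_eval etensor_def by simp
  qed
qed

lemma vee_expand:
  fixes cc dd :: "nat \<Rightarrow> real" and p q x :: "nat \<Rightarrow> 'a::real_vector"
  assumes V: "subspace V"
    and x: "\<forall>i<n. x i = cc i *\<^sub>R p i + dd i *\<^sub>R q i"
    and p: "\<forall>i<n. p i \<in> V" and q: "\<forall>i<n. q i \<in> V"
  shows "vee V n x = (\<lambda>\<phi>. \<Sum>S\<in>Pow {..<n}. (\<Prod>i<n. if i\<in>S then dd i else cc i) *
          vee V n (\<lambda>i. if i\<in>S then q i else p i) \<phi>)"
proof
  fix \<phi>
  show "vee V n x \<phi> = (\<Sum>S\<in>Pow {..<n}. (\<Prod>i<n. if i\<in>S then dd i else cc i) *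
          vee V n (\<lambda>i. if i\<in>S then q i else p i) \<phi>)"
  proof (cases "multilinear_form V n \<phi>")
    case True
    have e: "\<phi> (x \<circ> \<sigma>) = (\<Sum>S\<in>Pow {..<n}. (\<Prod>i<n. if i\<in>S then dd i else cc i) *
          \<phi> ((\<lambda>i. if i\<in>S then q i else p i) \<circ> \<sigma>))" if "\<sigma> permutes {..<n}" for \<sigma>
      using ml_expand[OF ml_perm[OF True that] V x p q] by simp
    show ?thesis unfolding vee_eval using True
      by (simp add: e sum.swap[of _ "Pow {..<n}"] sum_distrib_left mult_ac)
  next
    case False
    then show ?thesis unfolding vee_eval by simp
  qed
qed

lemma transfer:
  fixes T :: "'a::real_vector \<Rightarrow> 'b::real_vector"
  assumes lin_add: "\<forall>u\<in>V. \<forall>v\<in>V. T (u+v) = T u + T v" and lin_scale: "\<forall>u\<in>V. \<forall>c. T (c *\<^sub>R u) = c *\<^sub>R T u"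
    and TV: "\<forall>u\<in>V. T u \<in> W"
    and xs: "\<forall>s\<in>S. \<forall>i<n. xs s i \<in> V" and ys: "\<forall>s\<in>S'. \<forall>i<n. ys s i \<in> V"
    and eq: "(\<lambda>\<phi>. \<Sum>s\<in>S. a s * etensor V n (xs s) \<phi>) = (\<lambda>\<phi>. \<Sum>s\<in>S'. b s * etensor V n (ys s) \<phi>)"
  shows "(\<lambda>\<phi>. \<Sum>s\<in>S. a s * etensor W n (T \<circ> xs s) \<phi>) = (\<lambda>\<phi>. \<Sum>s\<in>S'. b s * etensor W n (T \<circ> ys s) \<phi>)"
proof
  fix \<phi>
  show "(\<Sum>s\<in>S. a s * etensor W n (T \<circ> xs s) \<phi>) = (\<Sum>s\<in>S'. b s * etensor W n (T \<circ> ys s) \<phi>)"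
  proof (cases "multilinear_form W n \<phi>")
    case ml: True
    define \<psi> where "\<psi> = (\<lambda>zs. \<phi> (\<lambda>i. if i<n then T (zs i) else 0))"
    have upd: "(\<lambda>j. if j<n then T ((zs(i:=w)) j) else 0) = (\<lambda>j. if j<n then T (zs j) else 0)(i := T w)"
      if "i < n" for zs i w using that by (auto simp: fun_eq_iff)
    have mlpsi: "multilinear_form V n \<psi>"
      unfolding multilinear_form_def
    proof (intro conjI allI impI ballI)
      fix zs :: "nat \<Rightarrow> 'a"
      show "\<psi> zs = \<psi> (\<lambda>i. if i < n then zs i else 0)" unfolding \<psi>_def by (simp cong: if_cong)
    next
      fix i zs u v assume i: "i < n" and zs: "\<forall>j<n. zs j \<in> V" and u: "u \<in> V" and v: "v \<in> V"
      have Z: "\<forall>j<n. (\<lambda>j. if j<n then T (zs j) else 0) j \<in> W" using zs TV by auto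
      show "\<psi> (zs(i := u + v)) = \<psi> (zs(i := u)) + \<psi> (zs(i := v))"
        unfolding \<psi>_def upd[OF i] using ml_add[OF ml i Z, of "T u" "T v"] lin_add u v TV by simp
    next
      fix i zs u c assume i: "i < n" and zs: "\<forall>j<n. zs j \<in> V" and u: "u \<in> V"
      have Z: "\<forall>j<n. (\<lambda>j. if j<n then T (zs j) else 0) j \<in> W" using zs TV by auto
      show "\<psi> (zs(i := c *\<^sub>R u)) = c * \<psi> (zs(i := u))"
        unfolding \<psi>_def upd[OF i] using ml_scale[OF ml i Z, of "T u" c] lin_scale u TV by simp
    qed
    have ev: "\<psi> zs = \<phi> (T \<circ> zs)" for zs unfolding \<psi>_def by (rule ml_trunc[OF ml]) auto
    from fun_cong[OF eq, of \<psi>] show ?thesis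
      using mlpsi ml unfolding etensor_def by (simp add: ev)
  next
    case False
    then show ?thesis unfolding etensor_def by simp
  qed
qed

lemma push_pis:
  fixes T :: "'a::real_vector \<Rightarrow> 'b::real_vector"
  assumes lin_add: "\<forall>u\<in>V. \<forall>v\<in>V. T (u+v) = T u + T v" and lin_scale: "\<forall>u\<in>V. \<forall>c. T (c *\<^sub>R u) = c *\<^sub>R T u"
    and TV: "\<forall>u\<in>V. T u \<in> W" and TC: "\<forall>u\<in>C. T u \<in> D" and CV: "C \<subseteq> V"
    and nrm: "\<forall>u\<in>C. 0 \<le> M (T u) \<and> M (T u) \<le> N u"
    and xs: "\<forall>i<n. xs i \<in> V" and ys: "\<forall>i<n. ys i = T (xs i)"
  shows "pis_plus_norm W M D n (vee W n ys) \<le> pis_plus_norm V N C n (vee V n xs)"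
  unfolding pis_plus_norm_def
proof (rule Inf_mono)
  fix b assume "b \<in> {ereal (\<Sum>k<K. \<bar>a k\<bar> * N (x k) ^ n) | (K::nat) a x.
       (\<forall>k<K. x k \<in> C) \<and> vee V n xs = (\<lambda>\<phi>. \<Sum>k<K. a k * tpow V n (x k) \<phi>)}"
  then obtain K :: nat and a x where b: "b = ereal (\<Sum>k<K. \<bar>a k\<bar> * N (x k) ^ n)"
    and xC: "\<forall>k<K. x k \<in> C" and rep: "vee V n xs = (\<lambda>\<phi>. \<Sum>k<K. a k * tpow V n (x k) \<phi>)" by blast
  have rep': "(\<lambda>\<phi>. \<Sum>\<sigma>\<in>{\<sigma>. \<sigma> permutes {..<n}}. (1 / fact n) * etensor V n (xs \<circ> \<sigma>) \<phi>) =
      (\<lambda>\<phi>. \<Sum>k\<in>{..<K}. a k * etensor V n ((\<lambda>k. \<lambda>_. x k) k) \<phi>)"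
    using rep unfolding vee_as_sum tpow_def by simp
  have xsV: "\<forall>\<sigma>\<in>{\<sigma>. \<sigma> permutes {..<n}}. \<forall>i<n. (xs \<circ> \<sigma>) i \<in> V"
    using xs permutes_in_image by fastforce
  have xV: "\<forall>k\<in>{..<K}. \<forall>i<n. (\<lambda>k. \<lambda>_. x k) k i \<in> V" using xC CV by auto
  have tr: "(\<lambda>\<phi>. \<Sum>\<sigma>\<in>{\<sigma>. \<sigma> permutes {..<n}}. (1 / fact n) * etensor W n (T \<circ> (xs \<circ> \<sigma>)) \<phi>) =
      (\<lambda>\<phi>. \<Sum>k\<in>{..<K}. a k * etensor W n (T \<circ> (\<lambda>k. \<lambda>_. x k) k) \<phi>)"
    by (rule transfer[OF lin_add lin_scale TV xsV xV rep'])
  have c1: "etensor W n (T \<circ> (xs \<circ> \<sigma>)) = etensor W n (ys \<circ> \<sigma>)" if "\<sigma> permutes {..<n}" for \<sigma>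
    by (rule etensor_cong) (use ys permutes_in_image[OF that] in auto)
  have "vee W n ys = (\<lambda>\<phi>. \<Sum>\<sigma>\<in>{\<sigma>. \<sigma> permutes {..<n}}. (1 / fact n) * etensor W n (T \<circ> (xs \<circ> \<sigma>)) \<phi>)"
    unfolding vee_as_sum by (rule ext, rule sum.cong) (auto simp: c1)
  also have "\<dots> = (\<lambda>\<phi>. \<Sum>k\<in>{..<K}. a k * etensor W n (T \<circ> (\<lambda>k. \<lambda>_. x k) k) \<phi>)" by (rule tr)
  also have "\<dots> = (\<lambda>\<phi>. \<Sum>k<K. a k * tpow W n (T (x k)) \<phi>)" by (simp add: tpow_def o_def)
  finally have "vee W n ys = (\<lambda>\<phi>. \<Sum>k<K. a k * tpow W n (T (x k)) \<phi>)" .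
  moreover have "(\<Sum>k<K. \<bar>a k\<bar> * M (T (x k)) ^ n) \<le> (\<Sum>k<K. \<bar>a k\<bar> * N (x k) ^ n)"
    by (rule sum_mono, rule mult_left_mono, rule power_mono) (use nrm xC in auto)
  moreover have "\<forall>k<K. T (x k) \<in> D" using TC xC by auto
  ultimately show "\<exists>a\<in>{ereal (\<Sum>k<K. \<bar>a k\<bar> * M (x k) ^ n) | (K::nat) a x.
       (\<forall>k<K. x k \<in> D) \<and> vee W n ys = (\<lambda>\<phi>. \<Sum>k<K. a k * tpow W n (x k) \<phi>)}. a \<le> b"
    unfolding b by (intro bexI[of _ "ereal (\<Sum>k<K. \<bar>a k\<bar> * M (T (x k)) ^ n)"]) (auto intro!: exI[of _ K])
qed


context
  fixes V :: "'a::real_vector set" and N C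
  assumes ons: "ordered_normed_space V N C"
begin

lemma ons_sub: "subspace V" using ons unfolding ordered_normed_space_def is_norm_on_def by blast
lemma ons_nn: "x \<in> V \<Longrightarrow> 0 \<le> N x" using ons unfolding ordered_normed_space_def is_norm_on_def by blast
lemma ons_zero: "x \<in> V \<Longrightarrow> N x = 0 \<longleftrightarrow> x = 0" using ons unfolding ordered_normed_space_def is_norm_on_def by blast
lemma ons_tri: "x \<in> V \<Longrightarrow> y \<in> V \<Longrightarrow> N (x + y) \<le> N x + N y" using ons unfolding ordered_normed_space_def is_norm_on_def by blast
lemma ons_scale: "x \<in> V \<Longrightarrow> N (c *\<^sub>R x) = \<bar>c\<bar> * N x" using ons unfolding ordered_normed_space_def is_norm_on_def by blast
lemma ons_CV: "C \<subseteq> V" using ons unfolding ordered_normed_space_def by blast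
lemma ons_Cadd: "x \<in> C \<Longrightarrow> y \<in> C \<Longrightarrow> x + y \<in> C" using ons unfolding ordered_normed_space_def by blast
lemma ons_Cscale: "x \<in> C \<Longrightarrow> 0 \<le> c \<Longrightarrow> c *\<^sub>R x \<in> C" using ons unfolding ordered_normed_space_def by blast
lemma ons_C0: "0 \<in> C"
proof -
  obtain x where "x \<in> C" using ons unfolding ordered_normed_space_def by blast
  from ons_Cscale[OF this, of 0] show ?thesis by simp
qed
lemma ons_gen: "x \<in> V \<Longrightarrow> \<exists>y\<in>C. \<exists>z\<in>C. x = y - z" using ons unfolding ordered_normed_space_def by blast
lemma ons_bdd: "bdd_above {pos_norm V N C x | x. x \<in> V \<and> N x \<le> 1}" using ons unfolding ordered_normed_space_def by (elim conjE)

lemma ons_diff: "y \<in> V \<Longrightarrow> z \<in> V \<Longrightarrow> N (y - z) \<le> N y + N z"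
proof -
  assume y: "y \<in> V" and z: "z \<in> V"
  have "y - z = y + (-1) *\<^sub>R z" by simp
  moreover have "(-1) *\<^sub>R z \<in> V" using z ons_sub by (simp add: subspace_neg)
  ultimately have "N (y - z) \<le> N y + N ((-1) *\<^sub>R z)" using ons_tri y by metis
  then show ?thesis using ons_scale[OF z, of "-1"] by simp
qed

lemma pos_norm_nonempty: "x \<in> V \<Longrightarrow> {N y + N z | y z. y \<in> C \<and> z \<in> C \<and> x = y - z} \<noteq> {}"
  using ons_gen by blast

lemma pos_norm_lt:
  assumes "x \<in> V" "pos_norm V N C x < b"
  shows "\<exists>y z. y \<in> C \<and> z \<in> C \<and> x = y - z \<and> N y + N z < b"
proof -
  from cInf_lessD[OF pos_norm_nonempty[OF assms(1)] assms(2)[unfolded pos_norm_def]]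
  show ?thesis by blast
qed

lemma pos_norm_ge: "x \<in> V \<Longrightarrow> N x \<le> pos_norm V N C x"
  unfolding pos_norm_def
proof (rule cInf_greatest[OF pos_norm_nonempty])
  fix w assume "x \<in> V" "w \<in> {N y + N z |y z. y \<in> C \<and> z \<in> C \<and> x = y - z}"
  then obtain y z where "y \<in> C" "z \<in> C" "x = y - z" "w = N y + N z" by blast
  then show "N x \<le> w" using ons_diff ons_CV by blast
qed

lemma cplus_ge: "x \<in> V \<Longrightarrow> N x \<le> 1 \<Longrightarrow> pos_norm V N C x \<le> c_plus V N C"
  unfolding c_plus_def by (rule cSup_upper[OF _ ons_bdd]) blast

lemma ons_N0: "N 0 = 0" using ons_zero[OF subspace_0[OF ons_sub]] by simp

lemma normalize: "x \<in> V \<Longrightarrow> x \<noteq> 0 \<Longrightarrow> (1 / N x) *\<^sub>R x \<in> V \<and> N ((1 / N x) *\<^sub>R x) = 1"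
  using ons_scale[of x "1 / N x"] ons_nn[of x] ons_zero[of x] ons_sub by (simp add: subspace_scale)

lemma cplus_ge1: "x \<in> V \<Longrightarrow> x \<noteq> 0 \<Longrightarrow> 1 \<le> c_plus V N C"
  using normalize[of x] pos_norm_ge[of "(1 / N x) *\<^sub>R x"] cplus_ge[of "(1 / N x) *\<^sub>R x"] by force

lemma decomp:
  assumes x: "x \<in> V" and eta: "0 < \<eta>"
  shows "\<exists>y z. y \<in> C \<and> z \<in> C \<and> x = y - z \<and> N y + N z \<le> (c_plus V N C + \<eta>) * N x"
proof (cases "x = 0")
  case True then show ?thesis using ons_C0 ons_N0 by (intro exI[of _ 0]) auto
next
  case False
  define x' where "x' = (1 / N x) *\<^sub>R x"
  have x': "x' \<in> V" "N x' = 1" using normalize[OF x False] by (auto simp: x'_def)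
  have Nx: "0 < N x" using ons_nn[OF x] ons_zero[OF x] False by auto
  have "pos_norm V N C x' < c_plus V N C + \<eta>" using cplus_ge[OF x'(1)] x'(2) eta by simp
  then obtain y z where yz: "y \<in> C" "z \<in> C" "x' = y - z" "N y + N z < c_plus V N C + \<eta>"
    using pos_norm_lt[OF x'(1)] by blast
  have yV: "y \<in> V" "z \<in> V" using yz ons_CV by auto
  have "x = N x *\<^sub>R x'" using Nx by (simp add: x'_def)
  then have "x = N x *\<^sub>R y - N x *\<^sub>R z" using yz(3) by (simp add: scaleR_diff_right)
  moreover have "N (N x *\<^sub>R y) + N (N x *\<^sub>R z) = N x * (N y + N z)"
    using ons_scale[OF yV(1)] ons_scale[OF yV(2)] Nx by (simp add: distrib_left)
  moreover have "N x * (N y + N z) \<le> (c_plus V N C + \<eta>) * N x"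
    using yz(4) Nx by (simp add: mult.commute)
  moreover have "N x *\<^sub>R y \<in> C" "N x *\<^sub>R z \<in> C" using ons_Cscale yz Nx by auto
  ultimately show ?thesis by metis
qed

lemma normalizeC: "y \<in> C \<Longrightarrow> \<exists>p. p \<in> C \<and> N p \<le> 1 \<and> y = N y *\<^sub>R p"
proof -
  assume y: "y \<in> C"
  show ?thesis
  proof (cases "y = 0")
    case True then show ?thesis using ons_C0 ons_N0 by (intro exI[of _ 0]) auto
  next
    case False
    have yV: "y \<in> V" using y ons_CV by auto
    have Ny: "0 < N y" using ons_nn[OF yV] ons_zero[OF yV] False by auto
    show ?thesis
      apply (rule exI[of _ "(1 / N y) *\<^sub>R y"])
      using normalize[OF yV False] ons_Cscale[OF y, of "1 / N y"] Ny by auto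
  qed
qed

lemma P_nonneg: "0 \<le> pis_plus_norm V N C n t"
  unfolding pis_plus_norm_def
  by (rule Inf_greatest) (use ons_nn ons_CV in \<open>auto intro!: sum_nonneg mult_nonneg_nonneg zero_le_power simp: subset_iff\<close>)

lemma Pi_nonneg: "0 \<le> pi_norm V N n t"
  unfolding pi_norm_def
  by (rule Inf_greatest) (use ons_nn in \<open>auto intro!: sum_nonneg prod_nonneg mult_nonneg_nonneg\<close>)

end


lemma lim_le_aux:
  fixes q k c p :: real
  assumes "\<forall>\<eta>>0. q \<le> (k+\<eta>)*(c+\<eta>)^n*(p+\<eta>)"
  shows "q \<le> k*c^n*p"
proof -
  have lim: "((\<lambda>\<eta>. (k+\<eta>)*(c+\<eta>)^n*(p+\<eta>)) \<longlongrightarrow> (k+0)*(c+0)^n*(p+0)) (at_right 0)"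
    by (intro tendsto_intros)
  have ev: "eventually (\<lambda>\<eta>. q \<le> (k+\<eta>)*(c+\<eta>)^n*(p+\<eta>)) (at_right (0::real))"
    using eventually_at_right_less[of "0::real"] by eventually_elim (use assms in auto)
  show ?thesis using tendsto_lowerbound[OF lim ev] by simp
qed

context
  fixes V :: "'a::real_vector set" and N C
  assumes ons: "ordered_normed_space V N C"
begin

lemma prep_vee:
  assumes xs: "\<forall>i<n. xs i \<in> V" and eta: "0 < \<eta>" and k': "0 \<le> k'"
    and Hw: "\<forall>w. (\<forall>i<n. w i \<in> C \<and> N (w i) \<le> 1) \<longrightarrow> prep V N C n (vee V n w) k'"
  shows "prep V N C n (vee V n xs) (k' * (c_plus V N C + \<eta>)^n * (\<Prod>i<n. N (xs i)))"
proof -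
  let ?c = "c_plus V N C"
  have "\<forall>i. \<exists>y z. i < n \<longrightarrow> y \<in> C \<and> z \<in> C \<and> xs i = y - z \<and> N y + N z \<le> (?c + \<eta>) * N (xs i)"
    using decomp[OF ons _ eta] xs by blast
  then obtain Y Z where YZ: "\<forall>i<n. Y i \<in> C \<and> Z i \<in> C \<and> xs i = Y i - Z i \<and> N (Y i) + N (Z i) \<le> (?c + \<eta>) * N (xs i)"
    by metis
  have "\<forall>y. \<exists>p. y \<in> C \<longrightarrow> p \<in> C \<and> N p \<le> 1 \<and> y = N y *\<^sub>R p" using normalizeC[OF ons] by blast
  then obtain nz where nz: "\<forall>y\<in>C. nz y \<in> C \<and> N (nz y) \<le> 1 \<and> y = N y *\<^sub>R nz y" by metis
  define p where "p = (\<lambda>i. nz (Y i))"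
  define q where "q = (\<lambda>i. nz (Z i))"
  define cc where "cc = (\<lambda>i. N (Y i))"
  define dd where "dd = (\<lambda>i. - N (Z i))"
  have x: "\<forall>i<n. xs i = cc i *\<^sub>R p i + dd i *\<^sub>R q i"
  proof (intro allI impI)
    fix i assume i: "i < n"
    have "xs i = Y i - Z i" using YZ i by blast
    also have "\<dots> = N (Y i) *\<^sub>R nz (Y i) - N (Z i) *\<^sub>R nz (Z i)" using nz YZ i by metis
    finally show "xs i = cc i *\<^sub>R p i + dd i *\<^sub>R q i" by (simp add: cc_def dd_def p_def q_def)
  qed
  have pC: "\<forall>i<n. p i \<in> C \<and> N (p i) \<le> 1" using nz YZ by (simp add: p_def)
  have qC: "\<forall>i<n. q i \<in> C \<and> N (q i) \<le> 1" using nz YZ by (simp add: q_def)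
  have pV: "\<forall>i<n. p i \<in> V" and qV: "\<forall>i<n. q i \<in> V" using pC qC ons_CV[OF ons] by auto
  have exp: "vee V n xs = (\<lambda>\<phi>. \<Sum>S\<in>Pow {..<n}. (\<Prod>i<n. if i\<in>S then dd i else cc i) *
          vee V n (\<lambda>i. if i\<in>S then q i else p i) \<phi>)"
    by (rule vee_expand[OF ons_sub[OF ons] x pV qV])
  have each: "\<forall>S\<in>Pow {..<n}. prep V N C n (vee V n (\<lambda>i. if i\<in>S then q i else p i)) k'"
    using Hw pC qC by auto
  have pr: "prep V N C n (vee V n xs) (\<Sum>S\<in>Pow {..<n}. \<bar>\<Prod>i<n. if i\<in>S then dd i else cc i\<bar> * k')"
    unfolding exp by (rule prep_sum[OF _ each]) simp
  have "(\<Sum>S\<in>Pow {..<n}. \<bar>\<Prod>i<n. if i\<in>S then dd i else cc i\<bar> * k') = (\<Prod>i<n. \<bar>dd i\<bar> + \<bar>cc i\<bar>) * k'"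
    by (simp add: sum_distrib_right[symmetric] sum_abs_prod_Pow)
  also have "\<dots> \<le> (\<Prod>i<n. (?c + \<eta>) * N (xs i)) * k'"
  proof (rule mult_right_mono[OF prod_mono k'])
    fix i assume "i \<in> {..<n}"
    then have i: "i < n" by simp
    have "Y i \<in> V" "Z i \<in> V" using YZ i ons_CV[OF ons] by auto
    then show "0 \<le> \<bar>dd i\<bar> + \<bar>cc i\<bar> \<and> \<bar>dd i\<bar> + \<bar>cc i\<bar> \<le> (?c + \<eta>) * N (xs i)"
      using YZ i ons_nn[OF ons] by (auto simp: dd_def cc_def)
  qed
  also have "\<dots> = k' * (?c + \<eta>)^n * (\<Prod>i<n. N (xs i))"
    by (simp add: prod.distrib)
  finally show ?thesis using prep_mono[OF pr] by blast
qed

lemma rep_of_tensor_space: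
  "t \<in> tensor_space V n \<Longrightarrow> \<exists>(K::nat) a xs. (\<forall>k<K. \<forall>i<n. xs k i \<in> V) \<and> t = (\<lambda>\<phi>. \<Sum>k<K. a k * etensor V n (xs k) \<phi>)"
  unfolding tensor_space_def by blast

lemma nonzero_vec:
  assumes n: "1 \<le> n" and t: "t \<in> tensor_space V n" and tz: "t \<noteq> (\<lambda>\<phi>. 0)"
  shows "\<exists>x\<in>V. x \<noteq> 0"
proof (rule ccontr)
  assume "\<not> (\<exists>x\<in>V. x \<noteq> 0)"
  then have z: "\<forall>x\<in>V. x = 0" by blast
  obtain K :: nat and a xs where r: "\<forall>k<K. \<forall>i<n. xs k i \<in> V" "t = (\<lambda>\<phi>. \<Sum>k<K. a k * etensor V n (xs k) \<phi>)"
    using rep_of_tensor_space[OF t] by blast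
  have "etensor V n (xs k) \<phi> = 0" if "k < K" for k \<phi>
  proof (cases "multilinear_form V n \<phi>")
    case True
    have "\<phi> (xs k) = 0" by (rule ml_zero_slot[OF True ons_sub[OF ons], of 0]) (use n r z that in auto)
    then show ?thesis unfolding etensor_def by simp
  qed (simp add: etensor_def)
  then have "t = (\<lambda>\<phi>. 0)" using r(2) by simp
  with tz show False by simp
qed

lemma cplus_nn: "0 \<le> c_plus V N C"
  using cplus_ge[OF ons subspace_0[OF ons_sub[OF ons]]] pos_norm_ge[OF ons subspace_0[OF ons_sub[OF ons]]] ons_N0[OF ons]
  by simp

lemma general_bound:
  fixes \<kappa> :: ereal
  assumes n: "1 \<le> n"
    and Hw: "\<forall>w. (\<forall>i<n. w i \<in> C \<and> N (w i) \<le> 1) \<longrightarrow> pis_plus_norm V N C n (vee V n w) \<le> \<kappa>"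
  shows "c_pi_splus n V N C / ereal (c_plus V N C ^ n) \<le> \<kappa>"
proof -
  let ?c = "c_plus V N C"
  have kap0: "0 \<le> \<kappa>"
    using Hw[rule_format, of "\<lambda>_. 0"] ons_C0[OF ons] ons_N0[OF ons] P_nonneg[OF ons, of n "vee V n (\<lambda>_. 0)"] by auto
  show ?thesis
  proof (cases "{t. t \<in> sym_tensors V n \<and> t \<noteq> (\<lambda>\<phi>. 0)} = {}")
    case True
    then have E: "{pis_plus_norm V N C n t / pi_norm V N n t |t. t \<in> sym_tensors V n \<and> t \<noteq> (\<lambda>\<phi>. 0)} = {}"
      by auto
    have "c_pi_splus n V N C = Sup ({}::ereal set)" unfolding c_pi_splus_def E by (rule refl)
    then have m: "c_pi_splus n V N C = -\<infinity>" by (simp add: bot_ereal_def)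
    have "0 \<le> ?c ^ n" using cplus_nn by simp
    then consider "?c ^ n = 0" | "0 < ?c ^ n" by linarith
    then show ?thesis
    proof cases
      case 1
      then show ?thesis unfolding m by (simp add: divide_ereal_def)
    next
      case 2
      define r where "r = ?c ^ n"
      have r: "0 < r" using 2 by (simp add: r_def)
      have i: "inverse (ereal r) = ereal (inverse r)" using r by simp
      have "(-\<infinity>::ereal) / ereal r = -\<infinity> * ereal (inverse r)" unfolding divide_ereal_def i by (rule refl)
      also have "\<dots> = -\<infinity>" using r by simp
      finally show ?thesis unfolding m r_def[symmetric] by simp
    qed
  next
    case False
    then obtain t0 where t0: "t0 \<in> sym_tensors V n" "t0 \<noteq> (\<lambda>\<phi>. 0)" by blast
    have "t0 \<in> tensor_space V n" using t0(1) unfolding sym_tensors_def by blast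
    then obtain x where "x \<in> V" "x \<noteq> 0" using nonzero_vec[OF n _ t0(2)] by blast
    then have c1: "1 \<le> ?c" by (rule cplus_ge1[OF ons])
    then have cn: "0 < ?c ^ n" by (intro zero_less_power) linarith
    define cn where "cn = ?c ^ n"
    have cn0: "0 < cn" unfolding cn_def by (rule cn)
    have main: "c_pi_splus n V N C \<le> ereal cn * \<kappa>"
      unfolding c_pi_splus_def
    proof (rule Sup_least)
      fix r assume "r \<in> {pis_plus_norm V N C n t / pi_norm V N n t |t. t \<in> sym_tensors V n \<and> t \<noteq> (\<lambda>\<phi>. 0)}"
      then obtain t where r: "r = pis_plus_norm V N C n t / pi_norm V N n t" and t: "t \<in> sym_tensors V n" by blast
      show "r \<le> ereal cn * \<kappa>"
      proof (cases "\<kappa> = \<infinity>")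
        case True then show ?thesis using cn0 by simp
      next
        case False
        then obtain k where kk: "\<kappa> = ereal k" using kap0 by (cases \<kappa>) auto
        then have k0: "0 \<le> k" using kap0 by simp
        have tts: "t \<in> tensor_space V n" using t unfolding sym_tensors_def by blast
        obtain K0 :: nat and a0 xs0 where r0: "\<forall>k<K0. \<forall>i<n. xs0 k i \<in> V" "t = (\<lambda>\<phi>. \<Sum>k<K0. a0 k * etensor V n (xs0 k) \<phi>)"
          using rep_of_tensor_space[OF tts] by blast
        have "pi_norm V N n t \<le> ereal (\<Sum>k<K0. \<bar>a0 k\<bar> * (\<Prod>i<n. N (xs0 k i)))"
          unfolding pi_norm_def by (rule Inf_lower) (use r0 in blast)
        then obtain p where p: "pi_norm V N n t = ereal p" "0 \<le> p"
          using Pi_nonneg[OF ons, of n t] by (cases "pi_norm V N n t") auto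
        have bnd: "pis_plus_norm V N C n t \<le> ereal ((k+\<eta>)*(?c+\<eta>)^n*(p+\<eta>))" if eta: "0 < \<eta>" for \<eta>
        proof -
          have "pi_norm V N n t < ereal (p + \<eta>)" using p eta by simp
          then obtain rr where rr: "rr \<in> {ereal (\<Sum>k<K. \<bar>a k\<bar> * (\<Prod>i<n. N (xs k i))) | (K::nat) a xs.
             (\<forall>k<K. \<forall>i<n. xs k i \<in> V) \<and> t = (\<lambda>\<phi>. \<Sum>k<K. a k * etensor V n (xs k) \<phi>)}" "rr < ereal (p + \<eta>)"
            unfolding pi_norm_def by (auto simp: Inf_less_iff)
          then obtain K :: nat and a xs where R: "\<forall>k<K. \<forall>i<n. xs k i \<in> V" "t = (\<lambda>\<phi>. \<Sum>k<K. a k * etensor V n (xs k) \<phi>)"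
            "(\<Sum>k<K. \<bar>a k\<bar> * (\<Prod>i<n. N (xs k i))) < p + \<eta>" by auto
          have Hw': "\<forall>w. (\<forall>i<n. w i \<in> C \<and> N (w i) \<le> 1) \<longrightarrow> prep V N C n (vee V n w) (k + \<eta>)"
          proof (intro allI impI)
            fix w assume "\<forall>i<n. w i \<in> C \<and> N (w i) \<le> 1"
            then have "pis_plus_norm V N C n (vee V n w) \<le> ereal k" using Hw kk by blast
            also have "\<dots> < ereal (k + \<eta>)" using eta by simp
            finally show "prep V N C n (vee V n w) (k + \<eta>)" by (rule prep_of_less)
          qed
          have each: "\<forall>j\<in>{..<K}. prep V N C n (vee V n (xs j)) ((k+\<eta>) * (?c + \<eta>)^n * (\<Prod>i<n. N (xs j i)))"
            using prep_vee[OF _ eta _ Hw'] R(1) k0 eta by auto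
          have t': "t = (\<lambda>\<phi>. \<Sum>j\<in>{..<K}. a j * vee V n (xs j) \<phi>)" by (rule sym_decomp[OF t R(2)])
          have pr: "prep V N C n t (\<Sum>j\<in>{..<K}. \<bar>a j\<bar> * ((k+\<eta>) * (?c + \<eta>)^n * (\<Prod>i<n. N (xs j i))))"
            unfolding t' by (rule prep_sum[OF _ each]) simp
          have "(\<Sum>j\<in>{..<K}. \<bar>a j\<bar> * ((k+\<eta>) * (?c + \<eta>)^n * (\<Prod>i<n. N (xs j i)))) =
                (k+\<eta>) * (?c + \<eta>)^n * (\<Sum>j<K. \<bar>a j\<bar> * (\<Prod>i<n. N (xs j i)))"
            by (simp add: sum_distrib_left mult_ac)
          also have "\<dots> \<le> (k+\<eta>) * (?c + \<eta>)^n * (p + \<eta>)"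
            using R(3) k0 eta cplus_nn by (intro mult_left_mono) auto
          finally show ?thesis using prep_le[OF prep_mono[OF pr]] by blast
        qed
        have Pfin: "pis_plus_norm V N C n t \<noteq> \<infinity>" using bnd[of 1] by auto
        then obtain q where q: "pis_plus_norm V N C n t = ereal q" "0 \<le> q"
          using P_nonneg[OF ons, of n t] by (cases "pis_plus_norm V N C n t") auto
        have qb: "q \<le> k * ?c^n * p"
          by (rule lim_le_aux) (use bnd q in auto)
        have qb': "q \<le> k * cn * p" using qb unfolding cn_def .
        show ?thesis
        proof (cases "p = 0")
          case True
          then have "q = 0" using qb' q by simp
          then have "r = 0" unfolding r q(1) p(1) using True by simp
          moreover have "0 \<le> ereal cn * \<kappa>" using kk k0 cn0 by simp
          ultimately show ?thesis by simp
        next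
          case False
          then have pp: "0 < p" using p by simp
          have "q / p \<le> cn * k" using qb' pp by (simp add: divide_le_eq mult_ac)
          then show ?thesis unfolding r q(1) p(1) kk using pp by simp
        qed
      qed
    qed
    have "c_pi_splus n V N C / ereal cn \<le> \<kappa>" using main cn0 by (subst ereal_divide_le_pos) auto
    then show ?thesis unfolding cn_def .
  qed
qed

end


lemma scaleR_fun_apply [simp]: "(c *\<^sub>R f) i = c *\<^sub>R f i"
  by (simp add: scaleR_fun_def)

definition ppart :: "(nat \<Rightarrow> real) \<Rightarrow> nat \<Rightarrow> real" where "ppart x = (\<lambda>i. max (x i) 0)"
definition npart :: "(nat \<Rightarrow> real) \<Rightarrow> nat \<Rightarrow> real" where "npart x = (\<lambda>i. max (- x i) 0)"

lemma ppart_npart: "x = ppart x - npart x"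
  by (auto simp: ppart_def npart_def fun_eq_iff)

lemma seq_ons:
  fixes V :: "(nat \<Rightarrow> real) set" and N
  assumes nrm: "is_norm_on V N"
    and coord: "\<forall>x\<in>V. \<forall>j. \<bar>x j\<bar> \<le> N x"
    and parts: "\<forall>x\<in>V. ppart x \<in> V \<and> npart x \<in> V \<and> N (ppart x) + N (npart x) \<le> N x"
    and C: "C = {x \<in> V. \<forall>i. 0 \<le> x i}"
    and x0: "x0 \<in> V" "N x0 = 1"
  shows "ordered_normed_space V N C \<and> c_plus V N C = 1"
proof -
  have sub: "subspace V" and nn: "\<forall>x\<in>V. 0 \<le> N x" using nrm unfolding is_norm_on_def by auto
  have CV: "C \<subseteq> V" using C by auto
  have Cadd: "\<forall>x\<in>C. \<forall>y\<in>C. x + y \<in> C" using C sub by (auto simp: subspace_add)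
  have Cscale: "\<forall>x\<in>C. \<forall>c\<ge>0. c *\<^sub>R x \<in> C" using C sub by (auto simp: subspace_scale)
  have C0: "0 \<in> C" using C sub by (auto simp: subspace_0)
  have closed: "\<forall>X x. (\<forall>k. X k \<in> C) \<and> x \<in> V \<and> (\<lambda>k. N (X k - x)) \<longlonglongrightarrow> 0 \<longrightarrow> x \<in> C"
  proof (intro allI impI, elim conjE)
    fix X x assume XC: "\<forall>k. X k \<in> C" and x: "x \<in> V" and lim: "(\<lambda>k. N (X k - x)) \<longlonglongrightarrow> 0"
    have "0 \<le> x i" for i
    proof (rule ccontr)
      assume "\<not> 0 \<le> x i"
      then have neg: "0 < - x i" by simp
      from order_tendstoD(2)[OF lim neg] obtain k where k: "N (X k - x) < - x i"
        by (auto simp: eventually_sequentially)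
      have "X k - x \<in> V" by (rule subspace_diff[OF sub]) (use XC CV x in auto)
      then have "\<bar>(X k - x) i\<bar> \<le> N (X k - x)" using coord by blast
      moreover have "0 \<le> X k i" using XC C by auto
      ultimately show False using k by auto
    qed
    then show "x \<in> C" using C x by auto
  qed
  have gen: "\<forall>x\<in>V. \<exists>y\<in>C. \<exists>z\<in>C. x = y - z"
  proof
    fix x assume x: "x \<in> V"
    have "ppart x \<in> C" "npart x \<in> C" using parts x C by (auto simp: ppart_def npart_def)
    then show "\<exists>y\<in>C. \<exists>z\<in>C. x = y - z" using ppart_npart by blast
  qed
  have pn_le: "pos_norm V N C x \<le> N x" if x: "x \<in> V" for x
  proof -
    have "ppart x \<in> C" "npart x \<in> C" using parts x C by (auto simp: ppart_def npart_def)
    then have "N (ppart x) + N (npart x) \<in> {N y + N z | y z. y \<in> C \<and> z \<in> C \<and> x = y - z}"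
      using ppart_npart by blast
    moreover have "bdd_below {N y + N z | y z. y \<in> C \<and> z \<in> C \<and> x = y - z}"
    proof (rule bdd_belowI[of _ 0])
      fix w assume "w \<in> {N y + N z | y z. y \<in> C \<and> z \<in> C \<and> x = y - z}"
      then obtain y z where "y \<in> C" "z \<in> C" "w = N y + N z" by blast
      then show "0 \<le> w" using nn CV by (simp add: add_nonneg_nonneg subset_iff)
    qed
    ultimately have "pos_norm V N C x \<le> N (ppart x) + N (npart x)"
      unfolding pos_norm_def by (rule cInf_lower)
    then show ?thesis using parts x by force
  qed
  have bdd: "bdd_above {pos_norm V N C x | x. x \<in> V \<and> N x \<le> 1}"
    by (rule bdd_aboveI[of _ 1]) (use pn_le in force)
  have ons: "ordered_normed_space V N C"
    unfolding ordered_normed_space_def using nrm CV Cadd Cscale C0 closed gen bdd by blast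
  have "c_plus V N C = 1"
    unfolding c_plus_def
  proof (rule cSup_eq_maximum)
    have "pos_norm V N C x0 = 1" using pn_le[OF x0(1)] pos_norm_ge[OF ons x0(1)] x0(2) by simp
    then show "1 \<in> {pos_norm V N C x | x. x \<in> V \<and> N x \<le> 1}" using x0 by force
    show "\<And>y. y \<in> {pos_norm V N C x | x. x \<in> V \<and> N x \<le> 1} \<Longrightarrow> y \<le> 1"
      using pn_le by force
  qed
  with ons show ?thesis by blast
qed

lemma l1_sum_abs: fixes x y :: "nat \<Rightarrow> real" shows "summable (\<lambda>i. \<bar>x i\<bar>) \<Longrightarrow> summable (\<lambda>i. \<bar>y i\<bar>) \<Longrightarrow> summable (\<lambda>i. \<bar>x i + y i\<bar>)"
  by (rule summable_rabs_comparison_test[of _ "\<lambda>i. \<bar>x i\<bar> + \<bar>y i\<bar>"]) (auto intro: summable_add)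

lemma l1_norm: "is_norm_on l1_V l1_N"
  unfolding is_norm_on_def
proof (intro conjI ballI allI)
  show "subspace l1_V" unfolding subspace_def l1_V_def
    by (auto simp: l1_sum_abs abs_mult intro: summable_mult)
next
  fix x assume x: "x \<in> l1_V"
  then have s: "summable (\<lambda>i. \<bar>x i\<bar>)" by (simp add: l1_V_def)
  show "0 \<le> l1_N x" unfolding l1_N_def by (rule suminf_nonneg[OF s]) simp
  show "(l1_N x = 0) = (x = 0)" unfolding l1_N_def using suminf_eq_zero_iff[OF s] by (auto simp: fun_eq_iff)
  fix c show "l1_N (c *\<^sub>R x) = \<bar>c\<bar> * l1_N x" unfolding l1_N_def using suminf_mult[OF s, of "\<bar>c\<bar>"] by (simp add: abs_mult)
next
  fix x y assume x: "x \<in> l1_V" and y: "y \<in> l1_V"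
  then have s: "summable (\<lambda>i. \<bar>x i\<bar>)" "summable (\<lambda>i. \<bar>y i\<bar>)" by (auto simp: l1_V_def)
  have "(\<Sum>i. \<bar>x i + y i\<bar>) \<le> (\<Sum>i. \<bar>x i\<bar> + \<bar>y i\<bar>)"
    by (rule suminf_le) (auto intro: l1_sum_abs s summable_add abs_triangle_ineq)
  also have "\<dots> = (\<Sum>i. \<bar>x i\<bar>) + (\<Sum>i. \<bar>y i\<bar>)" using suminf_add[OF s] by simp
  finally show "l1_N (x + y) \<le> l1_N x + l1_N y" unfolding l1_N_def by simp
qed

lemma l1_coord: "x \<in> l1_V \<Longrightarrow> \<bar>x j\<bar> \<le> l1_N x"
proof -
  assume "x \<in> l1_V"
  then have s: "summable (\<lambda>i. \<bar>x i\<bar>)" by (simp add: l1_V_def)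
  have "(\<Sum>i\<in>{j}. \<bar>x i\<bar>) \<le> (\<Sum>i. \<bar>x i\<bar>)" by (rule sum_le_suminf[OF s]) auto
  then show ?thesis by (simp add: l1_N_def)
qed

lemma l1_parts: "x \<in> l1_V \<Longrightarrow> ppart x \<in> l1_V \<and> npart x \<in> l1_V \<and> l1_N (ppart x) + l1_N (npart x) \<le> l1_N x"
proof -
  assume "x \<in> l1_V"
  then have s: "summable (\<lambda>i. \<bar>x i\<bar>)" by (simp add: l1_V_def)
  have sp: "summable (\<lambda>i. \<bar>ppart x i\<bar>)" 
    by (rule summable_rabs_comparison_test[of _ "\<lambda>i. \<bar>x i\<bar>"]) (use s in \<open>auto simp: ppart_def\<close>)
  have sn: "summable (\<lambda>i. \<bar>npart x i\<bar>)" 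
    by (rule summable_rabs_comparison_test[of _ "\<lambda>i. \<bar>x i\<bar>"]) (use s in \<open>auto simp: npart_def\<close>)
  have "l1_N (ppart x) + l1_N (npart x) = (\<Sum>i. \<bar>ppart x i\<bar> + \<bar>npart x i\<bar>)"
    unfolding l1_N_def using suminf_add[OF sp sn] .
  also have "\<dots> = l1_N x" unfolding l1_N_def by (rule arg_cong[where f=suminf]) (auto simp: ppart_def npart_def fun_eq_iff)
  finally show ?thesis using sp sn by (simp add: l1_V_def)
qed

lemma ebasis_l1: "ebasis i \<in> l1_C" "l1_N (ebasis i) = 1"
proof -
  have f: "(\<lambda>j. \<bar>ebasis i j\<bar>) = (\<lambda>j. if j = i then 1 else 0)" by (auto simp: ebasis_def fun_eq_iff)
  have "summable (\<lambda>j. \<bar>ebasis i j\<bar>)" unfolding f by (rule summable_finite[of "{i}"]) auto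
  then show "ebasis i \<in> l1_C" by (simp add: l1_C_def l1_V_def ebasis_def)
  show "l1_N (ebasis i) = 1" unfolding l1_N_def f by (subst suminf_finite[of "{i}"]) auto
qed

lemma l1_ons: "ordered_normed_space l1_V l1_N l1_C \<and> c_plus l1_V l1_N l1_C = 1"
  by (rule seq_ons[OF l1_norm _ _ _ _ ebasis_l1(2)[of 0]])
     (use l1_coord l1_parts ebasis_l1 in \<open>auto simp: l1_C_def\<close>)

lemma l1fin_norm: "is_norm_on (l1fin_V m) (l1fin_N m)"
  unfolding is_norm_on_def
proof (intro conjI ballI allI)
  show "subspace (l1fin_V m)" unfolding subspace_def l1fin_V_def by auto
next
  fix x assume x: "x \<in> l1fin_V m"
  show "0 \<le> l1fin_N m x" unfolding l1fin_N_def by (simp add: sum_nonneg)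
  show "(l1fin_N m x = 0) = (x = 0)"
  proof
    assume "l1fin_N m x = 0"
    then have "\<forall>i<m. x i = 0" unfolding l1fin_N_def by (subst (asm) sum_nonneg_eq_0_iff) auto
    then show "x = 0" using x by (auto simp: l1fin_V_def fun_eq_iff) (metis not_le)
  qed (simp add: l1fin_N_def)
  fix c show "l1fin_N m (c *\<^sub>R x) = \<bar>c\<bar> * l1fin_N m x" unfolding l1fin_N_def by (simp add: abs_mult sum_distrib_left)
next
  fix x y assume "x \<in> l1fin_V m" "y \<in> l1fin_V m"
  show "l1fin_N m (x + y) \<le> l1fin_N m x + l1fin_N m y" unfolding l1fin_N_def
    by (simp add: sum.distrib[symmetric] sum_mono abs_triangle_ineq)
qed

lemma l1fin_coord: "x \<in> l1fin_V m \<Longrightarrow> \<bar>x j\<bar> \<le> l1fin_N m x"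
proof (cases "j < m")
  case True
  then show "\<bar>x j\<bar> \<le> l1fin_N m x" unfolding l1fin_N_def by (intro member_le_sum) auto
next
  case False
  assume "x \<in> l1fin_V m"
  then show ?thesis using False by (simp add: l1fin_V_def l1fin_N_def sum_nonneg)
qed

lemma l1fin_parts: "x \<in> l1fin_V m \<Longrightarrow> ppart x \<in> l1fin_V m \<and> npart x \<in> l1fin_V m \<and> l1fin_N m (ppart x) + l1fin_N m (npart x) \<le> l1fin_N m x"
  unfolding l1fin_V_def l1fin_N_def
  by (auto simp: ppart_def npart_def sum.distrib[symmetric] intro!: sum_mono)

lemma ebasis_l1fin: "i < m \<Longrightarrow> ebasis i \<in> l1fin_C m \<and> l1fin_N m (ebasis i) = 1"
  unfolding l1fin_C_def l1fin_V_def l1fin_N_def ebasis_def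
  by (simp add: if_distrib[of abs] sum.delta cong: if_cong)

lemma l1fin_ons:
  assumes m: "1 \<le> m"
  shows "ordered_normed_space (l1fin_V m) (l1fin_N m) (l1fin_C m) \<and> c_plus (l1fin_V m) (l1fin_N m) (l1fin_C m) = 1"
proof -
  have e: "ebasis 0 \<in> l1fin_V m" "l1fin_N m (ebasis 0) = 1" using ebasis_l1fin[of 0 m] m by (auto simp: l1fin_C_def)
  show ?thesis
    by (rule seq_ons[OF l1fin_norm _ _ _ e]) (use l1fin_coord l1fin_parts in \<open>auto simp: l1fin_C_def\<close>)
qed


context
  fixes V :: "'a::real_vector set" and N C
  assumes ons: "ordered_normed_space V N C"
begin

lemma C_sum: "finite I \<Longrightarrow> (\<forall>i\<in>I. f i \<in> C) \<Longrightarrow> sum f I \<in> C"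
  by (induction I rule: finite_induct) (auto simp: ons_C0[OF ons] ons_Cadd[OF ons])

lemma N_sum: "finite I \<Longrightarrow> (\<forall>i\<in>I. f i \<in> V) \<Longrightarrow> N (sum f I) \<le> (\<Sum>i\<in>I. N (f i))"
proof (induction I rule: finite_induct)
  case empty then show ?case by (simp add: ons_N0[OF ons])
next
  case (insert j I)
  have "sum f I \<in> V" using insert by (auto intro: subspace_sum[OF ons_sub[OF ons]])
  then have "N (f j + sum f I) \<le> N (f j) + N (sum f I)" using ons_tri[OF ons] insert by auto
  then show ?case using insert by auto
qed

lemma Hw_general:
  assumes w: "\<forall>i<n. w i \<in> C \<and> N (w i) \<le> 1"
  shows "pis_plus_norm V N C n (vee V n w) \<le> kappa n"
proof -
  define T where "T = (\<lambda>x::nat\<Rightarrow>real. \<Sum>i<n. x i *\<^sub>R w i)"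
  have wV: "\<forall>i<n. w i \<in> V" using w ons_CV[OF ons] by auto
  have "pis_plus_norm V N C n (vee V n w) \<le> pis_plus_norm l1_V l1_N l1_C n (vee l1_V n ebasis)"
  proof (rule push_pis)
    show "\<forall>u\<in>l1_V. \<forall>v\<in>l1_V. T (u + v) = T u + T v"
      by (simp add: T_def scaleR_add_left sum.distrib)
    show "\<forall>u\<in>l1_V. \<forall>c. T (c *\<^sub>R u) = c *\<^sub>R T u"
      by (simp add: T_def scaleR_sum_right)
    show "\<forall>u\<in>l1_V. T u \<in> V"
      using wV by (auto simp: T_def intro!: subspace_sum[OF ons_sub[OF ons]] subspace_scale[OF ons_sub[OF ons]])
    show "\<forall>u\<in>l1_C. T u \<in> C"
      using w by (auto simp: T_def l1_C_def intro!: C_sum ons_Cscale[OF ons])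
    show "l1_C \<subseteq> l1_V" by (auto simp: l1_C_def)
    show "\<forall>u\<in>l1_C. 0 \<le> N (T u) \<and> N (T u) \<le> l1_N u"
    proof
      fix u assume u: "u \<in> l1_C"
      have TV: "T u \<in> V"
        using wV by (auto simp: T_def intro!: subspace_sum[OF ons_sub[OF ons]] subspace_scale[OF ons_sub[OF ons]])
      have "N (T u) \<le> (\<Sum>i<n. N (u i *\<^sub>R w i))"
        unfolding T_def by (rule N_sum) (use wV in \<open>auto intro: subspace_scale[OF ons_sub[OF ons]]\<close>)
      also have "\<dots> = (\<Sum>i<n. \<bar>u i\<bar> * N (w i))" using wV ons_scale[OF ons] by simp
      also have "\<dots> \<le> (\<Sum>i<n. \<bar>u i\<bar>)" using w by (intro sum_mono) (simp add: mult_left_le)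
      also have "\<dots> \<le> l1_N u" unfolding l1_N_def
        by (rule sum_le_suminf) (use u in \<open>auto simp: l1_C_def l1_V_def\<close>)
      finally show "0 \<le> N (T u) \<and> N (T u) \<le> l1_N u" using ons_nn[OF ons TV] by simp
    qed
    show "\<forall>i<n. ebasis i \<in> l1_V" using ebasis_l1(1) by (auto simp: l1_C_def)
    show "\<forall>i<n. w i = T (ebasis i)"
    proof (intro allI impI)
      fix i assume i: "i < n"
      have "T (ebasis i) = (\<Sum>j<n. (if i = j then w j else 0))"
        unfolding T_def ebasis_def by (rule sum.cong) auto
      also have "\<dots> = w i" using i by simp
      finally show "w i = T (ebasis i)" by simp
    qed
  qed
  then show ?thesis unfolding kappa_def .
qed

end

lemma kappa_le_fin:
  assumes nm: "n \<le> m"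
  shows "kappa n \<le> pis_plus_norm (l1fin_V m) (l1fin_N m) (l1fin_C m) n (vee (l1fin_V m) n ebasis)"
  unfolding kappa_def
proof (rule push_pis[where T=id])
  have sub: "l1fin_V m \<subseteq> l1_V"
  proof
    fix x assume x: "x \<in> l1fin_V m"
    have "summable (\<lambda>i. \<bar>x i\<bar>)" by (rule summable_finite[of "{..<m}"]) (use x in \<open>auto simp: l1fin_V_def\<close>)
    then show "x \<in> l1_V" by (simp add: l1_V_def)
  qed
  have eqN: "l1_N x = l1fin_N m x" if "x \<in> l1fin_V m" for x
    unfolding l1_N_def l1fin_N_def by (rule suminf_finite) (use that in \<open>auto simp: l1fin_V_def\<close>)
  show "\<forall>u\<in>l1fin_V m. \<forall>v\<in>l1fin_V m. id (u + v) = id u + id v" by simp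
  show "\<forall>u\<in>l1fin_V m. \<forall>c. id (c *\<^sub>R u) = c *\<^sub>R id u" by simp
  show "\<forall>u\<in>l1fin_V m. id u \<in> l1_V" using sub by auto
  show "\<forall>u\<in>l1fin_C m. id u \<in> l1_C" using sub by (auto simp: l1fin_C_def l1_C_def)
  show "l1fin_C m \<subseteq> l1fin_V m" by (auto simp: l1fin_C_def)
  show "\<forall>u\<in>l1fin_C m. 0 \<le> l1_N (id u) \<and> l1_N (id u) \<le> l1fin_N m u"
    using eqN l1fin_norm[of m] by (auto simp: l1fin_C_def is_norm_on_def)
  show "\<forall>i<n. ebasis i \<in> l1fin_V m" using ebasis_l1fin nm by (auto simp: l1fin_C_def)
  show "\<forall>i<n. ebasis i = id (ebasis i)" by simp
qed

lemma fin_le_kappa: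
  "pis_plus_norm (l1fin_V n) (l1fin_N n) (l1fin_C n) n (vee (l1fin_V n) n ebasis) \<le> kappa n"
  unfolding kappa_def
proof (rule push_pis[where T="\<lambda>x i. if i < n then x i else 0"])
  show "\<forall>u\<in>l1_V. \<forall>v\<in>l1_V. (\<lambda>i. if i < n then (u + v) i else 0) = (\<lambda>i. if i < n then u i else 0) + (\<lambda>i. if i < n then v i else 0)"
    by (auto simp: fun_eq_iff)
  show "\<forall>u\<in>l1_V. \<forall>c. (\<lambda>i. if i < n then (c *\<^sub>R u) i else 0) = c *\<^sub>R (\<lambda>i. if i < n then u i else 0)"
    by (auto simp: fun_eq_iff)
  show "\<forall>u\<in>l1_V. (\<lambda>i. if i < n then u i else 0) \<in> l1fin_V n" by (auto simp: l1fin_V_def)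
  show "\<forall>u\<in>l1_C. (\<lambda>i. if i < n then u i else 0) \<in> l1fin_C n" by (auto simp: l1fin_V_def l1fin_C_def l1_C_def)
  show "l1_C \<subseteq> l1_V" by (auto simp: l1_C_def)
  show "\<forall>u\<in>l1_C. 0 \<le> l1fin_N n (\<lambda>i. if i < n then u i else 0) \<and> l1fin_N n (\<lambda>i. if i < n then u i else 0) \<le> l1_N u"
  proof
    fix u assume u: "u \<in> l1_C"
    have "l1fin_N n (\<lambda>i. if i < n then u i else 0) = (\<Sum>i<n. \<bar>u i\<bar>)" by (simp add: l1fin_N_def)
    also have "\<dots> \<le> l1_N u" unfolding l1_N_def
      by (rule sum_le_suminf) (use u in \<open>auto simp: l1_C_def l1_V_def\<close>)
    finally show "0 \<le> l1fin_N n (\<lambda>i. if i < n then u i else 0) \<and> l1fin_N n (\<lambda>i. if i < n then u i else 0) \<le> l1_N u"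
      by (simp add: l1fin_N_def sum_nonneg)
  qed
  show "\<forall>i<n. ebasis i \<in> l1_V" using ebasis_l1(1) by (auto simp: l1_C_def)
  show "\<forall>i<n. ebasis i = (\<lambda>j. if j < n then ebasis i j else 0)" by (auto simp: ebasis_def fun_eq_iff)
qed


definition Dform :: "nat \<Rightarrow> (nat \<Rightarrow> nat \<Rightarrow> real) \<Rightarrow> real" where
  "Dform n ys = (\<Prod>i<n. ys i i)"

lemma prod_upd:
  fixes ys :: "nat \<Rightarrow> nat \<Rightarrow> real"
  assumes "i < n"
  shows "(\<Prod>j<n. (ys(i:=w)) j j) = w i * (\<Prod>j\<in>{..<n}-{i}. ys j j)"
proof -
  have "(\<Prod>j<n. (ys(i:=w)) j j) = (ys(i:=w)) i i * (\<Prod>j\<in>{..<n}-{i}. (ys(i:=w)) j j)"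
    by (rule prod.remove) (use assms in auto)
  also have "(\<Prod>j\<in>{..<n}-{i}. (ys(i:=w)) j j) = (\<Prod>j\<in>{..<n}-{i}. ys j j)"
    by (rule prod.cong) auto
  finally show ?thesis by simp
qed

lemma Dform_ml: "multilinear_form V n (Dform n)"
  unfolding multilinear_form_def
proof (intro conjI allI impI ballI)
  fix ys :: "nat \<Rightarrow> nat \<Rightarrow> real"
  show "Dform n ys = Dform n (\<lambda>i. if i < n then ys i else 0)"
    unfolding Dform_def by (rule prod.cong) auto
next
  fix i ys u v assume i: "i < n"
  show "Dform n (ys(i := u + v)) = Dform n (ys(i := u)) + Dform n (ys(i := v))"
    unfolding Dform_def prod_upd[OF i] by (simp add: distrib_right)
next
  fix i ys u c assume i: "i < n"
  show "Dform n (ys(i := c *\<^sub>R u)) = c * Dform n (ys(i := u))"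
    unfolding Dform_def prod_upd[OF i] by simp
qed

lemma Dform_perm:
  assumes p: "\<sigma> permutes {..<n}"
  shows "Dform n (ebasis \<circ> \<sigma>) = (if \<sigma> = id then 1 else 0)"
proof (cases "\<sigma> = id")
  case True then show ?thesis by (simp add: Dform_def ebasis_def)
next
  case False
  then obtain i where i: "\<sigma> i \<noteq> i" by (auto simp: fun_eq_iff)
  then have "i < n" using permutes_not_in[OF p, of i] by auto
  moreover have "ebasis (\<sigma> i) i = 0" using i by (simp add: ebasis_def)
  ultimately have "(\<Prod>j<n. ebasis (\<sigma> j) j) = 0" by (intro prod_zero) auto
  then show ?thesis using False by (simp add: Dform_def)
qed

lemma vee_ebasis_D: "vee V n ebasis (Dform n) = 1 / fact n"
proof -
  have "(\<Sum>\<sigma>\<in>{\<sigma>. \<sigma> permutes {..<n}}. Dform n (ebasis \<circ> \<sigma>)) = (\<Sum>\<sigma>\<in>{\<sigma>. \<sigma> permutes {..<n}}. if \<sigma> = id then 1 else 0)"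
    by (rule sum.cong) (auto simp: Dform_perm)
  also have "\<dots> = 1" using finite_perms[of n] by (simp add: sum.delta')
  finally show ?thesis unfolding vee_eval using Dform_ml by simp
qed

lemma reindex_perms:
  "\<exists>(K::nat) h. K = fact n \<and> (\<forall>k<K. h k permutes {..<n}) \<and>
     (\<forall>g::(nat\<Rightarrow>nat)\<Rightarrow>real. (\<Sum>\<sigma>\<in>{\<sigma>. \<sigma> permutes {..<n}}. g \<sigma>) = (\<Sum>k<K. g (h k)))"
proof -
  obtain h where h: "bij_betw h {0..<card {\<sigma>. \<sigma> permutes {..<n}}} {\<sigma>. \<sigma> permutes {..<n}}"
    using ex_bij_betw_nat_finite[OF finite_perms[of n]] by blast
  have K: "card {\<sigma>. \<sigma> permutes {..<n}} = fact n" by (rule card_perms)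
  have "\<forall>k<fact n. h k permutes {..<n}" using h K by (auto simp: bij_betw_def)
  moreover have "(\<Sum>\<sigma>\<in>{\<sigma>. \<sigma> permutes {..<n}}. g \<sigma>) = (\<Sum>k<fact n. g (h k))" for g :: "(nat\<Rightarrow>nat)\<Rightarrow>real"
    using sum.reindex_bij_betw[OF h, of g] K by (simp add: atLeast0LessThan)
  ultimately show ?thesis by blast
qed

lemma vee_rep:
  assumes xs: "\<forall>i<n. xs i \<in> V"
  shows "\<exists>(K::nat) h. K = fact n \<and> (\<forall>k<K. h k permutes {..<n}) \<and>
     vee V n xs = (\<lambda>\<phi>. \<Sum>k<K. (1 / fact n) * etensor V n (xs \<circ> h k) \<phi>)"
proof -
  obtain K :: nat and h where h: "K = fact n" "\<forall>k<K. h k permutes {..<n}"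
     "\<forall>g::(nat\<Rightarrow>nat)\<Rightarrow>real. (\<Sum>\<sigma>\<in>{\<sigma>. \<sigma> permutes {..<n}}. g \<sigma>) = (\<Sum>k<K. g (h k))"
    using reindex_perms[of n] by blast
  have "vee V n xs = (\<lambda>\<phi>. \<Sum>k<K. (1 / fact n) * etensor V n (xs \<circ> h k) \<phi>)"
    unfolding vee_as_sum using h(3) by simp
  then show ?thesis using h by blast
qed

lemma vee_sym:
  assumes xs: "\<forall>i<n. xs i \<in> V"
  shows "vee V n xs \<in> sym_tensors V n"
proof -
  obtain K :: nat and h where h: "K = fact n" "\<forall>k<K. h k permutes {..<n}"
     "vee V n xs = (\<lambda>\<phi>. \<Sum>k<K. (1 / fact n) * etensor V n (xs \<circ> h k) \<phi>)"
    using vee_rep[OF xs] by blast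
  have ts: "vee V n xs \<in> tensor_space V n"
    unfolding tensor_space_def
    by (rule CollectI, rule exI[of _ K], rule exI[of _ "\<lambda>_. 1 / fact n"], rule exI[of _ "\<lambda>k. xs \<circ> h k"])
       (use h xs permutes_in_image in \<open>fastforce\<close>)
  have sym: "vee V n xs = (\<lambda>\<phi>. vee V n xs (\<lambda>ys. \<phi> (ys \<circ> \<tau>)))" if tau: "\<tau> permutes {..<n}" for \<tau>
  proof
    fix \<phi> :: "(nat \<Rightarrow> 'a) \<Rightarrow> real"
    have iff: "multilinear_form V n (\<lambda>ys. \<phi> (ys \<circ> \<tau>)) \<longleftrightarrow> multilinear_form V n \<phi>"
    proof
      assume "multilinear_form V n (\<lambda>ys. \<phi> (ys \<circ> \<tau>))"
      from ml_perm[OF this permutes_inv[OF tau]]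
      have "multilinear_form V n (\<lambda>ys. \<phi> (ys \<circ> inv \<tau> \<circ> \<tau>))" by (simp add: o_assoc)
      moreover have eq: "(\<lambda>ys. \<phi> (ys \<circ> inv \<tau> \<circ> \<tau>)) = \<phi>"
        by (rule ext) (simp add: o_assoc[symmetric] permutes_inv_o(2)[OF tau])
      ultimately show "multilinear_form V n \<phi>" by (simp only: eq)
    qed (rule ml_perm[OF _ tau])
    have "(\<Sum>\<sigma>\<in>{\<sigma>. \<sigma> permutes {..<n}}. \<phi> (xs \<circ> \<sigma> \<circ> \<tau>)) = (\<Sum>\<sigma>\<in>{\<sigma>. \<sigma> permutes {..<n}}. \<phi> (xs \<circ> \<sigma>))"
      using sum_permutations_compose_right[OF tau, of "\<lambda>\<sigma>. \<phi> (xs \<circ> \<sigma>)"] by (simp add: o_assoc)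
    then show "vee V n xs \<phi> = vee V n xs (\<lambda>ys. \<phi> (ys \<circ> \<tau>))"
      unfolding vee_eval iff by simp
  qed
  show ?thesis unfolding sym_tensors_def using ts sym by blast
qed

lemma lower_bound:
  fixes V :: "(nat \<Rightarrow> real) set" and N C
  assumes ons: "ordered_normed_space V N C"
    and e: "\<forall>i<n. ebasis i \<in> C \<and> N (ebasis i) = 1"
    and coord: "\<forall>x\<in>V. \<forall>j. \<bar>x j\<bar> \<le> N x"
  shows "pis_plus_norm V N C n (vee V n ebasis) \<le> c_pi_splus n V N C"
proof -
  let ?t = "vee V n ebasis"
  have eV: "\<forall>i<n. ebasis i \<in> V" using e ons_CV[OF ons] by auto
  have sym: "?t \<in> sym_tensors V n" by (rule vee_sym[OF eV])
  have nz: "?t \<noteq> (\<lambda>\<phi>. 0)"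
  proof
    assume "?t = (\<lambda>\<phi>. 0)"
    then have "?t (Dform n) = 0" by simp
    then show False using vee_ebasis_D[of V n] by simp
  qed
  obtain K :: nat and h where h: "K = fact n" "\<forall>k<K. h k permutes {..<n}"
     "?t = (\<lambda>\<phi>. \<Sum>k<K. (1 / fact n) * etensor V n (ebasis \<circ> h k) \<phi>)"
    using vee_rep[OF eV] by blast
  have up: "pi_norm V N n ?t \<le> ereal 1"
  proof -
    have "pi_norm V N n ?t \<le> ereal (\<Sum>k<K. \<bar>1 / fact n\<bar> * (\<Prod>i<n. N ((ebasis \<circ> h k) i)))"
      unfolding pi_norm_def
      by (rule Inf_lower, rule CollectI, rule exI[of _ K], rule exI[of _ "\<lambda>_. 1 / fact n"], rule exI[of _ "\<lambda>k. ebasis \<circ> h k"])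
         (use h eV permutes_in_image in fastforce)
    also have "(\<Sum>k<K. \<bar>1 / fact n\<bar> * (\<Prod>i<n. N ((ebasis \<circ> h k) i))) = (\<Sum>k<K. 1 / fact n)"
    proof (rule sum.cong[OF refl])
      fix k assume "k \<in> {..<K}"
      then have "\<forall>i<n. h k i < n" using h(2) permutes_in_image by fastforce
      then have "(\<Prod>i<n. N ((ebasis \<circ> h k) i)) = 1" using e by (intro prod.neutral) auto
      then show "\<bar>1 / fact n\<bar> * (\<Prod>i<n. N ((ebasis \<circ> h k) i)) = 1 / fact n" by simp
    qed
    also have "\<dots> = 1" using h(1) by simp
    finally show ?thesis .
  qed
  have lo: "ereal (1 / fact n) \<le> pi_norm V N n ?t"
    unfolding pi_norm_def
  proof (rule Inf_greatest)
    fix r assume "r \<in> {ereal (\<Sum>k<K. \<bar>a k\<bar> * (\<Prod>i<n. N (xs k i))) | (K::nat) a xs.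
       (\<forall>k<K. \<forall>i<n. xs k i \<in> V) \<and> ?t = (\<lambda>\<phi>. \<Sum>k<K. a k * etensor V n (xs k) \<phi>)}"
    then obtain K :: nat and a xs where r: "r = ereal (\<Sum>k<K. \<bar>a k\<bar> * (\<Prod>i<n. N (xs k i)))"
      and xs: "\<forall>k<K. \<forall>i<n. xs k i \<in> V" and rep: "?t = (\<lambda>\<phi>. \<Sum>k<K. a k * etensor V n (xs k) \<phi>)" by blast
    have "1 / fact n = (\<Sum>k<K. a k * Dform n (xs k))"
      using fun_cong[OF rep, of "Dform n"] vee_ebasis_D[of V n] Dform_ml[of V n] by (simp add: etensor_def)
    also have "\<dots> \<le> \<bar>\<Sum>k<K. a k * Dform n (xs k)\<bar>" by simp
    also have "\<dots> \<le> (\<Sum>k<K. \<bar>a k * Dform n (xs k)\<bar>)" by (rule sum_abs)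
    also have "\<dots> \<le> (\<Sum>k<K. \<bar>a k\<bar> * (\<Prod>i<n. N (xs k i)))"
    proof (rule sum_mono)
      fix k assume k: "k \<in> {..<K}"
      have "\<bar>Dform n (xs k)\<bar> = (\<Prod>i<n. \<bar>xs k i i\<bar>)" by (simp add: Dform_def abs_prod)
      also have "\<dots> \<le> (\<Prod>i<n. N (xs k i))"
        by (rule prod_mono) (use coord xs k in auto)
      finally show "\<bar>a k * Dform n (xs k)\<bar> \<le> \<bar>a k\<bar> * (\<Prod>i<n. N (xs k i))"
        by (simp add: abs_mult mult_left_mono)
    qed
    finally show "ereal (1 / fact n) \<le> r" unfolding r by simp
  qed
  obtain p where p: "pi_norm V N n ?t = ereal p" using up lo by (cases "pi_norm V N n ?t") auto
  have a: "0 < 1 / (fact n :: real)" by simp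
  have b: "1 / fact n \<le> p" using lo p by simp
  have p0: "0 < p" using less_le_trans[OF a b] .
  have p1: "p \<le> 1" using up p by simp
  have ratio: "pis_plus_norm V N C n ?t \<le> pis_plus_norm V N C n ?t / pi_norm V N n ?t"
  proof (cases "pis_plus_norm V N C n ?t")
    case (real q)
    then have q0: "0 \<le> q" using P_nonneg[OF ons, of n ?t] by simp
    have "q \<le> q / p" using q0 p0 p1 by (simp add: le_divide_eq mult_left_le)
    then show ?thesis unfolding real p using p0 by simp
  next
    case PInf
    then show ?thesis unfolding p using p0 by simp
  next
    case MInf
    then show ?thesis by simp
  qed
  also have "\<dots> \<le> c_pi_splus n V N C"
    unfolding c_pi_splus_def by (rule Sup_upper) (use sym nz in blast)
  finally show ?thesis .
qed


lemma gen_bound: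
  fixes V :: "'b::real_vector set"
  assumes ons: "ordered_normed_space V N C" and n: "1 \<le> n"
  shows "c_pi_splus n V N C / ereal (c_plus V N C ^ n) \<le> kappa n"
  by (rule general_bound[OF ons n]) (use Hw_general[OF ons] in blast)

lemma gen_bound1:
  fixes V :: "'b::real_vector set"
  assumes ons: "ordered_normed_space V N C" and n: "1 \<le> n" and c: "c_plus V N C = 1"
  shows "c_pi_splus n V N C \<le> kappa n"
  using gen_bound[OF ons n] c by (simp add: one_ereal_def[symmetric])

lemma fin_eq: "1 \<le> n \<Longrightarrow> n \<le> m \<Longrightarrow> c_pi_splus n (l1fin_V m) (l1fin_N m) (l1fin_C m) = kappa n"
proof -
  assume n: "1 \<le> n" and nm: "n \<le> m"
  have m: "1 \<le> m" using n nm by simp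
  have o: "ordered_normed_space (l1fin_V m) (l1fin_N m) (l1fin_C m)" "c_plus (l1fin_V m) (l1fin_N m) (l1fin_C m) = 1"
    using l1fin_ons[OF m] by auto
  have "kappa n \<le> pis_plus_norm (l1fin_V m) (l1fin_N m) (l1fin_C m) n (vee (l1fin_V m) n ebasis)"
    by (rule kappa_le_fin[OF nm])
  also have "\<dots> \<le> c_pi_splus n (l1fin_V m) (l1fin_N m) (l1fin_C m)"
    by (rule lower_bound[OF o(1)]) (use ebasis_l1fin nm l1fin_coord in auto)
  finally show ?thesis using gen_bound1[OF o(1) n o(2)] by simp
qed

lemma l1_eq: "1 \<le> n \<Longrightarrow> c_pi_splus n l1_V l1_N l1_C = kappa n"
proof -
  assume n: "1 \<le> n"
  have o: "ordered_normed_space l1_V l1_N l1_C" "c_plus l1_V l1_N l1_C = 1" using l1_ons by auto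
  have "kappa n \<le> c_pi_splus n l1_V l1_N l1_C"
    unfolding kappa_def
    by (rule lower_bound[OF o(1)]) (use ebasis_l1 l1_coord in auto)
  then show ?thesis using gen_bound1[OF o(1) n o(2)] by simp
qed

theorem theorem5p1:
  fixes n :: nat
  assumes "n \<ge> 1"
  shows
    "(kappa n = pis_plus_norm (l1fin_V n) (l1fin_N n) (l1fin_C n) n (vee (l1fin_V n) n ebasis))
   \<and> (\<forall>m::nat. n \<le> m \<longrightarrow> c_pi_splus n (l1fin_V m) (l1fin_N m) (l1fin_C m) = kappa n)
   \<and> (c_pi_splus n l1_V l1_N l1_C = kappa n)
   \<and> (\<forall>(V::'a::real_vector set) N C. ordered_normed_space V N C \<longrightarrow>
        c_pi_splus n V N C / ereal (c_plus V N C ^ n) \<le> kappa n)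
   \<and> (\<forall>(V::'a::real_vector set) N C. ordered_normed_space V N C \<and> c_plus V N C = 1 \<longrightarrow>
        c_pi_splus n V N C \<le> kappa n)
   \<and> (ordered_normed_space l1_V l1_N l1_C)
   \<and> (c_plus l1_V l1_N l1_C = 1)
   \<and> (ordered_normed_space (l1fin_V n) (l1fin_N n) (l1fin_C n))
   \<and> (c_plus (l1fin_V n) (l1fin_N n) (l1fin_C n) = 1)
   \<and> (c_pi_splus n (l1fin_V n) (l1fin_N n) (l1fin_C n) = kappa n)"
proof (intro conjI allI impI)
  show "kappa n = pis_plus_norm (l1fin_V n) (l1fin_N n) (l1fin_C n) n (vee (l1fin_V n) n ebasis)"
    using fin_le_kappa[of n] kappa_le_fin[of n n] by simp
  show "\<And>m. n \<le> m \<Longrightarrow> c_pi_splus n (l1fin_V m) (l1fin_N m) (l1fin_C m) = kappa n"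
    using fin_eq assms by simp
  show "c_pi_splus n l1_V l1_N l1_C = kappa n" using l1_eq assms by simp
  show "\<And>(V::'a::real_vector set) N C. ordered_normed_space V N C \<Longrightarrow>
        c_pi_splus n V N C / ereal (c_plus V N C ^ n) \<le> kappa n"
    using gen_bound assms by blast
  show "\<And>(V::'a::real_vector set) N C. ordered_normed_space V N C \<and> c_plus V N C = 1 \<Longrightarrow>
        c_pi_splus n V N C \<le> kappa n"
    using gen_bound1 assms by blast
  show "ordered_normed_space l1_V l1_N l1_C" using l1_ons by simp
  show "c_plus l1_V l1_N l1_C = 1" using l1_ons by simp
  show "ordered_normed_space (l1fin_V n) (l1fin_N n) (l1fin_C n)" using l1fin_ons assms by simp
  show "c_plus (l1fin_V n) (l1fin_N n) (l1fin_C n) = 1" using l1fin_ons assms by simp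
  show "c_pi_splus n (l1fin_V n) (l1fin_N n) (l1fin_C n) = kappa n" using fin_eq assms by simp
qed


end
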